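(* The disease-free equilibrium $E_0=\left(\frac{\Lambda}{\lambda},\frac{r\Lambda}{\mu\lambda},0,0\right)$ of the model is unstable if $\mathcal{R}_0>1$ and locally asymptotically stable if $\mathcal{R}_0<1$.
   Context: The model is $\dot S=\Lambda-F_1(S,I_1)-F_2(S,I_2)-\lambda S$, $\dot V_1=rS-(\mu+kI_2)V_1$, $\dot I_1=F_1(S,I_1)-\alpha_1I_1$, $\dot I_2=F_2(S,I_2)+kI_2V_1-\alpha_2I_2$ on $\mathbb{R}^4_+$. The constants $\Lambda,\mu,r,k,\gamma_1,\gamma_2>0$ and $v_1,v_2\ge0$; $\lambda=r+\mu$ and $\alpha_i=\gamma_i+v_i+\mu$. For $i=1,2$ the incidence functions satisfy: - (H1) $F_i(S,I_i)=I_if_i(S,I_i)$ with $F_i,f_i\in C^2(\mathbb{R}^2_+,\mathbb{R}_+)$ and $F_i(0,I_i)=F_i(S,0)=0$; - (H2) $\partial f_i/\partial S>0$ and $\partial f_i/\partial I_i\le0$; - (H3) $\lim_{I_i\to0^+}F_i(S,I_i)/I_i$ exists and is positive for $S>0$. Let $S^0=\Lambda/\lambda$ and $\sigma_i=\frac{\partial F_i}{\partial I_i}(S^0,0)$. Set $\mathcal{R}_1=\sigma_1/\alpha_1$, $\mathcal{R}_2=\sigma_2/\alpha_2+\frac{kr\Lambda}{\alpha_2\mu\lambda}$ and $\mathcal{R}_0=\max\{\mathcal{R}_1,\mathcal{R}_2\}$. *)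

theory Defs
  imports "HOL-Analysis.Analysis"
begin

definition C2_on :: "(real \<times> real) set \<Rightarrow> (real \<times> real \<Rightarrow> real) \<Rightarrow> bool" where
  "C2_on U g \<longleftrightarrow>
     (\<exists>g' :: real \<times> real \<Rightarrow> ((real \<times> real) \<Rightarrow>\<^sub>L real).
      \<exists>g'' :: real \<times> real \<Rightarrow> ((real \<times> real) \<Rightarrow>\<^sub>L ((real \<times> real) \<Rightarrow>\<^sub>L real)).
        (\<forall>p\<in>U. (g has_derivative blinfun_apply (g' p)) (at p)
               \<and> (g' has_derivative blinfun_apply (g'' p)) (at p))
        \<and> continuous_on U g'')"

definition C2_on_quadrant :: "(real \<Rightarrow> real \<Rightarrow> real) \<Rightarrow> bool" where
  "C2_on_quadrant F \<longleftrightarrow>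
     (\<exists>U. open U \<and> {p. fst p \<ge> 0 \<and> snd p \<ge> 0} \<subseteq> U \<and> C2_on U (\<lambda>p. F (fst p) (snd p)))"

definition orthant4 :: "(real \<times> real \<times> real \<times> real) set" where
  "orthant4 = {(S, V, I1, I2). S \<ge> 0 \<and> V \<ge> 0 \<and> I1 \<ge> 0 \<and> I2 \<ge> 0}"

definition model_rhs ::
  "real \<Rightarrow> real \<Rightarrow> real \<Rightarrow> real \<Rightarrow> real \<Rightarrow> real \<Rightarrow> real \<Rightarrow> real
   \<Rightarrow> (real \<Rightarrow> real \<Rightarrow> real) \<Rightarrow> (real \<Rightarrow> real \<Rightarrow> real)
   \<Rightarrow> real \<times> real \<times> real \<times> real \<Rightarrow> real \<times> real \<times> real \<times> real" where
  "model_rhs \<Lambda> \<mu> r k \<gamma>1 \<gamma>2 v1 v2 F1 F2 = (\<lambda>(S, V, I1, I2).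
     (\<Lambda> - F1 S I1 - F2 S I2 - (r + \<mu>) * S,
      r * S - (\<mu> + k * I2) * V,
      F1 S I1 - (\<gamma>1 + v1 + \<mu>) * I1,
      F2 S I2 + k * I2 * V - (\<gamma>2 + v2 + \<mu>) * I2))"

definition is_solution ::
  "('a::real_normed_vector \<Rightarrow> 'a) \<Rightarrow> 'a set \<Rightarrow> (real \<Rightarrow> 'a) \<Rightarrow> bool" where
  "is_solution X D x \<longleftrightarrow>
     (\<forall>t\<ge>0. x t \<in> D \<and> (x has_vector_derivative X (x t)) (at t within {0..}))"

definition lyapunov_stable ::
  "('a::real_normed_vector \<Rightarrow> 'a) \<Rightarrow> 'a set \<Rightarrow> 'a \<Rightarrow> bool" where
  "lyapunov_stable X D e \<longleftrightarrow>
     (\<forall>\<epsilon>>0. \<exists>\<delta>>0. \<forall>x. is_solution X D x \<and> dist (x 0) e < \<delta> \<longrightarrow>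
        (\<forall>t\<ge>0. dist (x t) e < \<epsilon>))"

definition locally_asymptotically_stable ::
  "('a::real_normed_vector \<Rightarrow> 'a) \<Rightarrow> 'a set \<Rightarrow> 'a \<Rightarrow> bool" where
  "locally_asymptotically_stable X D e \<longleftrightarrow>
     lyapunov_stable X D e \<and>
     (\<exists>\<eta>>0. \<forall>x. is_solution X D x \<and> dist (x 0) e < \<eta> \<longrightarrow> (x \<longlongrightarrow> e) at_top)"

definition unstable ::
  "('a::real_normed_vector \<Rightarrow> 'a) \<Rightarrow> 'a set \<Rightarrow> 'a \<Rightarrow> bool" where
  "unstable X D e \<longleftrightarrow> \<not> lyapunov_stable X D e"

text \<open>Hypotheses (H1)-(H3) on an incidence function F = I f.\<close>
definition incidence_ok :: "(real \<Rightarrow> real \<Rightarrow> real) \<Rightarrow> (real \<Rightarrow> real \<Rightarrow> real) \<Rightarrow> bool" where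
  "incidence_ok F f \<longleftrightarrow>
     C2_on_quadrant F \<and> C2_on_quadrant f \<and>
     (\<forall>S I. S \<ge> 0 \<longrightarrow> I \<ge> 0 \<longrightarrow> F S I = I * f S I \<and> F S I \<ge> 0 \<and> f S I \<ge> 0) \<and>
     (\<forall>I\<ge>0. F 0 I = 0) \<and> (\<forall>S\<ge>0. F S 0 = 0) \<and>
     (\<forall>S I. S \<ge> 0 \<longrightarrow> I \<ge> 0 \<longrightarrow>
        deriv (\<lambda>s. f s I) S > 0 \<and> deriv (\<lambda>i. f S i) I \<le> 0) \<and>
     (\<forall>S>0. \<exists>L>0. ((\<lambda>I. F S I / I) \<longlongrightarrow> L) (at_right 0))"

end

theory Submission
  imports Defs
begin

lemma pow_has_integral:
  fixes c t :: real and n :: nat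
  assumes "0 \<le> t"
  shows "((\<lambda>s. c * s^n / fact n) has_integral c * t^(Suc n) / fact (Suc n)) {0..t}"
proof -
  have "((\<lambda>s. c * s^n / fact n) has_integral ((\<lambda>s. c * s^(Suc n) / fact (Suc n)) t - (\<lambda>s. c * s^(Suc n) / fact (Suc n)) 0)) {0..t}"
  proof (rule fundamental_theorem_of_calculus[OF assms])
    fix x assume "x \<in> {0..t}"
    have "((\<lambda>s. c * s^(Suc n) / fact (Suc n)) has_real_derivative c * (real (Suc n) * x^n) / fact (Suc n)) (at x within {0..t})"
      by (intro derivative_eq_intros) auto
    moreover have "c * (real (Suc n) * x^n) / fact (Suc n) = c * x^n / fact n"
    proof -
      have "(fact (Suc n) :: real) = real (Suc n) * fact n" by (simp only: fact_Suc of_nat_mult)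
      then show ?thesis by (simp del: of_nat_Suc)
    qed
    ultimately show "((\<lambda>s. c * s^(Suc n) / fact (Suc n)) has_vector_derivative c * x^n / fact n) (at x within {0..t})"
      by (simp add: has_real_derivative_iff_has_vector_derivative)
  qed
  then show ?thesis by simp
qed

lemma at_within_Ici_eq:
  fixes t T :: real
  assumes "0 \<le> t" "t < T"
  shows "at t within {0..T} = at t within {0..}"
proof (rule at_within_nhd[of _ "{..<T}"])
  show "{0..T} \<inter> {..<T} - {t} = {0..} \<inter> {..<T} - {t}" by auto
qed (use assms in auto)

lemma picard_exists:
  fixes G :: "'a::banach \<Rightarrow> 'a"
  assumes bnd: "\<And>z. norm (G z) \<le> B"
    and lip: "\<And>z w. norm (G z - G w) \<le> L * norm (z - w)"
    and L: "0 \<le> L"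
  shows "\<exists>x. x 0 = x0 \<and> (\<forall>t\<ge>0. (x has_vector_derivative G (x t)) (at t within {0..}))"
proof -
  have B: "0 \<le> B" using bnd[of x0] by (meson norm_ge_zero order_trans)
  have Gc: "continuous_on UNIV G"
  proof (rule lipschitz_on_continuous_on)
    show "L-lipschitz_on UNIV G"
      using L lip by (auto simp: lipschitz_on_def dist_norm)
  qed
  define \<Phi> :: "(real \<Rightarrow> 'a) \<Rightarrow> real \<Rightarrow> 'a" where "\<Phi> = (\<lambda>q t. x0 + integral {0..t} (\<lambda>s. G (q s)))"
  define p where "p n = (\<Phi> ^^ n) (\<lambda>t. x0)" for n
  have p0: "p 0 = (\<lambda>t. x0)" by (simp add: p_def)
  have pS: "p (Suc n) t = x0 + integral {0..t} (\<lambda>s. G (p n s))" for n t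
    by (simp add: p_def \<Phi>_def)
  have cont: "continuous_on {0..T} (p n)" for n T
  proof (induction n)
    case 0 then show ?case by (simp add: p0)
  next
    case (Suc n)
    have "continuous_on {0..T} (\<lambda>s. G (p n s))"
      by (rule continuous_on_compose2[OF Gc Suc]) auto
    then have "continuous_on {0..T} (\<lambda>t. integral {0..t} (\<lambda>s. G (p n s)))"
      by (intro indefinite_integral_continuous_1 integrable_continuous_real)
    then show ?case unfolding pS by (intro continuous_intros)
  qed
  have Gpc: "continuous_on {0..T} (\<lambda>s. G (p n s))" for n T
    by (rule continuous_on_compose2[OF Gc cont]) auto
  have integ: "(\<lambda>s. G (p n s)) integrable_on {0..t}" for n t
    by (intro integrable_continuous_real Gpc)
  have est: "norm (p (Suc n) t - p n t) \<le> B * L^n * t^(Suc n) / fact (Suc n)" if "0 \<le> t" for n t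
    using that
  proof (induction n arbitrary: t)
    case 0
    have "norm (p (Suc 0) t - p 0 t) = norm (integral {0..t} (\<lambda>s. G x0))"
      by (simp add: pS p0)
    also have "\<dots> \<le> integral {0..t} (\<lambda>s. B * s^0 / fact 0)"
      by (intro integral_norm_bound_integral) (auto simp: bnd)
    also have "\<dots> = B * t^(Suc 0) / fact (Suc 0)"
      using pow_has_integral[OF 0, of B 0] 0 by (simp add: integral_unique)
    finally show ?case by simp
  next
    case (Suc n)
    have "p (Suc (Suc n)) t - p (Suc n) t = integral {0..t} (\<lambda>s. G (p (Suc n) s)) - integral {0..t} (\<lambda>s. G (p n s))"
      unfolding pS[of "Suc n" t] pS[of n t] by simp
    also have "\<dots> = integral {0..t} (\<lambda>s. G (p (Suc n) s) - G (p n s))"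
      by (rule integral_diff[OF integ integ, symmetric])
    finally have "norm (p (Suc (Suc n)) t - p (Suc n) t) = norm (integral {0..t} (\<lambda>s. G (p (Suc n) s) - G (p n s)))"
      by simp
    also have "\<dots> \<le> integral {0..t} (\<lambda>s. (L * B * L^n) * s^(Suc n) / fact (Suc n))"
    proof (intro integral_norm_bound_integral)
      show "(\<lambda>s. G (p (Suc n) s) - G (p n s)) integrable_on {0..t}"
        by (intro integrable_diff integ)
      show "(\<lambda>s. L * B * L ^ n * s ^ Suc n / fact (Suc n)) integrable_on {0..t}"
        using pow_has_integral[OF Suc.prems] by blast
      fix s assume s: "s \<in> {0..t}"
      have "norm (G (p (Suc n) s) - G (p n s)) \<le> L * norm (p (Suc n) s - p n s)"
        by (rule lip)
      also have "\<dots> \<le> L * (B * L^n * s^(Suc n) / fact (Suc n))"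
        using Suc.IH[of s] s L by (intro mult_left_mono) auto
      finally show "norm (G (p (Suc n) s) - G (p n s)) \<le> L * B * L ^ n * s ^ Suc n / fact (Suc n)"
        by (simp add: mult.assoc)
    qed
    also have "\<dots> = (L * B * L^n) * t^(Suc (Suc n)) / fact (Suc (Suc n))"
      by (rule integral_unique[OF pow_has_integral[OF Suc.prems, of "L * B * L^n" "Suc n"]])
    finally show ?case by (simp add: mult_ac)
  qed
  define x where "x t = x0 + suminf (\<lambda>i. p (Suc i) t - p i t)" for t
  have ps: "p n t = x0 + (\<Sum>i<n. p (Suc i) t - p i t)" for n t
    using sum_lessThan_telescope[of "\<lambda>i. p i t" n] by (simp add: p0)
  have ul: "uniform_limit {0..T} p x sequentially" if "0 \<le> T" for T
  proof -
    have sM: "summable (\<lambda>i. B * T * (inverse (fact i) * (L*T)^i))"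
      by (intro summable_mult summable_exp)
    have M: "norm (p (Suc i) t - p i t) \<le> B * T * (inverse (fact i) * (L*T)^i)" if "t \<in> {0..T}" for i t
    proof -
      have "norm (p (Suc i) t - p i t) \<le> B * L^i * t^(Suc i) / fact (Suc i)"
        using est that by auto
      also have "\<dots> \<le> B * L^i * T^(Suc i) / fact (Suc i)"
        using that B L by (intro divide_right_mono mult_left_mono power_mono) auto
      also have "\<dots> \<le> B * L^i * T^(Suc i) / fact i"
        using that B L by (intro divide_left_mono mult_nonneg_nonneg fact_mono) auto
      also have "\<dots> = B * T * (inverse (fact i) * (L*T)^i)"
        by (simp add: field_simps power_mult_distrib)
      finally show ?thesis .
    qed
    have "uniform_limit {0..T} (\<lambda>n t. \<Sum>i<n. p (Suc i) t - p i t) (\<lambda>t. suminf (\<lambda>i. p (Suc i) t - p i t)) sequentially"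
      by (rule Weierstrass_m_test[OF M sM])
    then have "uniform_limit {0..T} (\<lambda>n t. x0 + (\<Sum>i<n. p (Suc i) t - p i t)) (\<lambda>t. x0 + suminf (\<lambda>i. p (Suc i) t - p i t)) sequentially"
      by (intro uniform_limit_add uniform_limit_const)
    then show ?thesis unfolding x_def by (simp add: ps[symmetric])
  qed
  have xc: "continuous_on {0..T} x" if "0 \<le> T" for T
    by (rule uniform_limit_theorem[OF _ ul[OF that]]) (auto simp: cont)
  have Gxc: "continuous_on {0..T} (\<lambda>s. G (x s))" if "0 \<le> T" for T
    by (rule continuous_on_compose2[OF Gc xc[OF that]]) auto
  have ulG: "uniform_limit {0..T} (\<lambda>n s. G (p n s)) (\<lambda>s. G (x s)) sequentially" if "0 \<le> T" for T
    unfolding uniform_limit_iff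
  proof (intro allI impI)
    fix e :: real assume e: "0 < e"
    have "\<forall>\<^sub>F n in sequentially. \<forall>s\<in>{0..T}. dist (p n s) (x s) < e / (L + 1)"
      using ul[OF that] e L unfolding uniform_limit_iff by auto
    then show "\<forall>\<^sub>F n in sequentially. \<forall>s\<in>{0..T}. dist (G (p n s)) (G (x s)) < e"
    proof (rule eventually_mono)
      fix n assume h: "\<forall>s\<in>{0..T}. dist (p n s) (x s) < e / (L + 1)"
      show "\<forall>s\<in>{0..T}. dist (G (p n s)) (G (x s)) < e"
      proof
        fix s assume s: "s \<in> {0..T}"
        have "dist (G (p n s)) (G (x s)) \<le> L * dist (p n s) (x s)"
          using lip by (simp add: dist_norm)
        also have "\<dots> \<le> L * (e / (L + 1))"
          using h s L by (intro mult_left_mono) (auto simp: less_imp_le)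
        also have "\<dots> < e"
          using e L by (simp add: field_simps)
        finally show "dist (G (p n s)) (G (x s)) < e" .
      qed
    qed
  qed
  have xint: "x t = x0 + integral {0..t} (\<lambda>s. G (x s))" if t0: "0 \<le> t" for t
  proof -
    obtain I J where I: "\<And>n. ((\<lambda>s. G (p n s)) has_integral I n) {0..t}"
      and J: "((\<lambda>s. G (x s)) has_integral J) {0..t}" and IJ: "I \<longlonglongrightarrow> J"
      by (rule uniform_limit_integral[OF ulG[OF t0] Gpc]) auto
    have "(\<lambda>n. p (Suc n) t) \<longlonglongrightarrow> x0 + J"
    proof -
      have "integral {0..t} (\<lambda>s. G (p n s)) = I n" for n using I[of n] by (rule integral_unique)
      then show ?thesis unfolding pS using IJ by (auto intro: tendsto_add)
    qed
    moreover have "(\<lambda>n. p (Suc n) t) \<longlonglongrightarrow> x t"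
      using tendsto_uniform_limitI[OF ul[OF t0], of t] t0
      using LIMSEQ_Suc[of "\<lambda>n. p n t"] by auto
    ultimately have "x t = x0 + J" using LIMSEQ_unique by blast
    then show ?thesis using J by (simp add: integral_unique)
  qed
  have "x 0 = x0" using xint[of 0] by simp
  moreover have "(x has_vector_derivative G (x t)) (at t within {0..})" if t: "0 \<le> t" for t
  proof -
    have "((\<lambda>u. integral {0..u} (\<lambda>s. G (x s))) has_vector_derivative G (x t)) (at t within {0..t+1})"
      using t by (intro integral_has_vector_derivative Gxc) auto
    then have "((\<lambda>u. x0 + integral {0..u} (\<lambda>s. G (x s))) has_vector_derivative G (x t)) (at t within {0..t+1})"
      by (intro derivative_eq_intros) auto
    then have "(x has_vector_derivative G (x t)) (at t within {0..t+1})"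
      by (rule has_vector_derivative_transform_within[where d=1]) (use t xint in auto)
    then show ?thesis using at_within_Ici_eq[of t "t+1"] t by simp
  qed
  ultimately show ?thesis by blast
qed

lemma C2_quadrant_lip:
  assumes "C2_on_quadrant F" "0 \<le> M"
  shows "\<exists>K\<ge>0. \<forall>a b a' b'. a \<in> {0..M} \<longrightarrow> b \<in> {0..M} \<longrightarrow> a' \<in> {0..M} \<longrightarrow> b' \<in> {0..M} \<longrightarrow>
           \<bar>F a b - F a' b'\<bar> \<le> K * (\<bar>a - a'\<bar> + \<bar>b - b'\<bar>)"
proof -
  obtain U g' g'' where U: "open U" "{p. fst p \<ge> 0 \<and> snd p \<ge> 0} \<subseteq> U"
    and d1: "\<And>p. p \<in> U \<Longrightarrow> ((\<lambda>p. F (fst p) (snd p)) has_derivative blinfun_apply (g' p)) (at p)"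
    and d2: "\<And>p. p \<in> U \<Longrightarrow> (g' has_derivative blinfun_apply (g'' p)) (at p)"
    using assms(1) unfolding C2_on_quadrant_def C2_on_def by blast
  define Q where "Q = {0..M} \<times> {0..M::real}"
  have QU: "Q \<subseteq> U" using U(2) by (auto simp: Q_def)
  have "continuous_on Q g'"
    using QU d2 by (intro continuous_at_imp_continuous_on ballI) (meson has_derivative_continuous subsetD)
  then have "compact (g' ` Q)"
    by (intro compact_continuous_image) (auto simp: Q_def intro: compact_Times)
  then obtain K0 where K0: "\<And>p. p \<in> Q \<Longrightarrow> norm (g' p) \<le> K0"
    by (meson bounded_iff compact_imp_bounded imageI)
  define K where "K = max K0 0"
  have K: "\<And>p. p \<in> Q \<Longrightarrow> onorm (blinfun_apply (g' p)) \<le> K"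
    using K0 by (fastforce simp: K_def norm_blinfun.rep_eq[symmetric])
  have bound: "norm (F (fst p) (snd p) - F (fst q) (snd q)) \<le> K * norm (p - q)" if "p \<in> Q" "q \<in> Q" for p q
  proof (rule differentiable_bound[of Q "\<lambda>p. F (fst p) (snd p)" "\<lambda>p. blinfun_apply (g' p)"])
    show "convex Q" by (auto simp: Q_def intro: convex_Times)
    show "((\<lambda>p. F (fst p) (snd p)) has_derivative blinfun_apply (g' x)) (at x within Q)" if "x \<in> Q" for x
      using d1 QU that has_derivative_at_withinI by blast
  qed (use K that in auto)
  show ?thesis
  proof (intro exI[of _ K] conjI allI impI)
    show "0 \<le> K" by (simp add: K_def)
    fix a b a' b' :: real
    assume h: "a \<in> {0..M}" "b \<in> {0..M}" "a' \<in> {0..M}" "b' \<in> {0..M}"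
    have "\<bar>F a b - F a' b'\<bar> \<le> K * norm ((a, b) - (a', b'))"
      using bound[of "(a,b)" "(a',b')"] h by (auto simp: Q_def)
    also have "\<dots> \<le> K * (\<bar>a - a'\<bar> + \<bar>b - b'\<bar>)"
      using norm_Pair_le[of "a - a'" "b - b'"] by (intro mult_left_mono) (auto simp: K_def)
    finally show "\<bar>F a b - F a' b'\<bar> \<le> K * (\<bar>a - a'\<bar> + \<bar>b - b'\<bar>)" .
  qed
qed

definition cl :: "real \<Rightarrow> real \<Rightarrow> real" where "cl M y = max 0 (min M y)"

definition clamp4 :: "real \<Rightarrow> real \<times> real \<times> real \<times> real \<Rightarrow> real \<times> real \<times> real \<times> real" where
  "clamp4 M z = (cl M (fst z), cl M (fst (snd z)), cl M (fst (snd (snd z))), cl M (snd (snd (snd z))))"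

lemma cl_lip: "\<bar>cl M y - cl M y'\<bar> \<le> \<bar>y - y'\<bar>"
  by (simp add: cl_def max_def min_def abs_if)

lemma cl_range: "0 \<le> M \<Longrightarrow> cl M y \<in> {0..M}"
  by (simp add: cl_def)

lemma comps_le:
  fixes z :: "real \<times> real \<times> real \<times> real"
  shows "\<bar>fst z\<bar> \<le> norm z" "\<bar>fst (snd z)\<bar> \<le> norm z" "\<bar>fst (snd (snd z))\<bar> \<le> norm z"
    "\<bar>snd (snd (snd z))\<bar> \<le> norm z"
proof -
  obtain a b c d where z: "z = (a, b, c, d)" by (cases z) auto
  have n: "norm z = sqrt (a^2 + (b^2 + (c^2 + d^2)))" by (simp add: z norm_Pair)
  have e: "\<bar>a\<bar> = sqrt (a^2)" "\<bar>b\<bar> = sqrt (b^2)" "\<bar>c\<bar> = sqrt (c^2)" "\<bar>d\<bar> = sqrt (d^2)" by simp_all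
  have "sqrt (a^2) \<le> sqrt (a^2 + (b^2 + (c^2 + d^2)))" "sqrt (b^2) \<le> sqrt (a^2 + (b^2 + (c^2 + d^2)))"
     "sqrt (c^2) \<le> sqrt (a^2 + (b^2 + (c^2 + d^2)))" "sqrt (d^2) \<le> sqrt (a^2 + (b^2 + (c^2 + d^2)))"
    by (intro real_sqrt_le_mono; simp)+
  then show "\<bar>fst z\<bar> \<le> norm z" "\<bar>fst (snd z)\<bar> \<le> norm z" "\<bar>fst (snd (snd z))\<bar> \<le> norm z"
    "\<bar>snd (snd (snd z))\<bar> \<le> norm z" unfolding n by (simp_all only: e[symmetric] z fst_conv snd_conv)
qed

lemma norm4_le:
  fixes a b c d :: real
  shows "norm (a, b, c, d) \<le> \<bar>a\<bar> + \<bar>b\<bar> + \<bar>c\<bar> + \<bar>d\<bar>"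
proof -
  have "norm (a, b, c, d) \<le> norm a + norm (b, c, d)" by (rule norm_Pair_le)
  also have "norm (b, c, d) \<le> norm b + norm (c, d)" by (rule norm_Pair_le)
  also have "norm (c, d) \<le> norm c + norm d" by (rule norm_Pair_le)
  finally show ?thesis by simp
qed

lemma trunc_field:
  fixes F1 F2 :: "real \<Rightarrow> real \<Rightarrow> real" and \<Lambda> \<mu> r k \<gamma>1 \<gamma>2 v1 v2 :: real
  assumes M: "0 \<le> M" and K: "0 \<le> K"
    and L1: "\<And>a b a' b'. a \<in> {0..M} \<Longrightarrow> b \<in> {0..M} \<Longrightarrow> a' \<in> {0..M} \<Longrightarrow> b' \<in> {0..M} \<Longrightarrow>
           \<bar>F1 a b - F1 a' b'\<bar> \<le> K * (\<bar>a - a'\<bar> + \<bar>b - b'\<bar>)"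
    and L2: "\<And>a b a' b'. a \<in> {0..M} \<Longrightarrow> b \<in> {0..M} \<Longrightarrow> a' \<in> {0..M} \<Longrightarrow> b' \<in> {0..M} \<Longrightarrow>
           \<bar>F2 a b - F2 a' b'\<bar> \<le> K * (\<bar>a - a'\<bar> + \<bar>b - b'\<bar>)"
    and F0: "F1 0 0 = 0" "F2 0 0 = 0"
  defines "G \<equiv> \<lambda>z. model_rhs \<Lambda> \<mu> r k \<gamma>1 \<gamma>2 v1 v2 F1 F2 (clamp4 M z)"
  shows "\<exists>B L. 0 \<le> L \<and> (\<forall>z. norm (G z) \<le> B) \<and> (\<forall>z w. norm (G z - G w) \<le> L * norm (z - w))"
proof -
  define lam where "lam = r + \<mu>"
  define \<alpha>1 where "\<alpha>1 = \<gamma>1 + v1 + \<mu>"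
  define \<alpha>2 where "\<alpha>2 = \<gamma>2 + v2 + \<mu>"
  have Gz: "G z = (\<Lambda> - F1 a b1 - F2 a b2 - lam * a, r * a - (\<mu> + k * b2) * c,
                   F1 a b1 - \<alpha>1 * b1, F2 a b2 + k * b2 * c - \<alpha>2 * b2)"
    if "a = cl M (fst z)" "c = cl M (fst (snd z))" "b1 = cl M (fst (snd (snd z)))" "b2 = cl M (snd (snd (snd z)))"
    for z a b1 b2 c
    using that by (simp add: G_def clamp4_def model_rhs_def lam_def \<alpha>1_def \<alpha>2_def)
  have Fb: "\<bar>F a b\<bar> \<le> 2 * K * M" if "a \<in> {0..M}" "b \<in> {0..M}"
    and LF: "\<And>a b a' b'. a \<in> {0..M} \<Longrightarrow> b \<in> {0..M} \<Longrightarrow> a' \<in> {0..M} \<Longrightarrow> b' \<in> {0..M} \<Longrightarrow>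
           \<bar>F a b - F a' b'\<bar> \<le> K * (\<bar>a - a'\<bar> + \<bar>b - b'\<bar>)" and "F 0 0 = 0" for F :: "real \<Rightarrow> real \<Rightarrow> real" and a b
  proof -
    have "\<bar>F a b\<bar> = \<bar>F a b - F 0 0\<bar>" using \<open>F 0 0 = 0\<close> by simp
    also have "\<dots> \<le> K * (\<bar>a - 0\<bar> + \<bar>b - 0\<bar>)" using LF[of a b 0 0] that M by auto
    also have "\<dots> \<le> K * (M + M)" using that K by (intro mult_left_mono) auto
    finally show ?thesis by simp
  qed
  define B where "B = \<bar>\<Lambda>\<bar> + 4*K*M + \<bar>lam\<bar>*M + (\<bar>r\<bar>*M + \<bar>\<mu>\<bar>*M + \<bar>k\<bar>*M*M) + (2*K*M + \<bar>\<alpha>1\<bar>*M)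
     + (2*K*M + \<bar>k\<bar>*M*M + \<bar>\<alpha>2\<bar>*M)"
  define L where "L = 8*K + \<bar>lam\<bar> + \<bar>r\<bar> + \<bar>\<mu>\<bar> + 4*\<bar>k\<bar>*M + \<bar>\<alpha>1\<bar> + \<bar>\<alpha>2\<bar>"
  have bnd: "norm (G z) \<le> B" for z
  proof -
    define a where "a = cl M (fst z)"
    define c where "c = cl M (fst (snd z))"
    define b1 where "b1 = cl M (fst (snd (snd z)))"
    define b2 where "b2 = cl M (snd (snd (snd z)))"
    have r: "a \<in> {0..M}" "c \<in> {0..M}" "b1 \<in> {0..M}" "b2 \<in> {0..M}"
      using cl_range[OF M] by (auto simp: a_def c_def b1_def b2_def)
    have f1: "\<bar>F1 a b1\<bar> \<le> 2*K*M" "\<bar>F2 a b2\<bar> \<le> 2*K*M"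
      using Fb[OF _ _ L1 F0(1)] Fb[OF _ _ L2 F0(2)] r by auto
    have ab: "\<bar>a\<bar> \<le> M" "\<bar>c\<bar> \<le> M" "\<bar>b1\<bar> \<le> M" "\<bar>b2\<bar> \<le> M" using r by auto
    have p: "\<bar>lam * a\<bar> \<le> \<bar>lam\<bar> * M" "\<bar>r * a\<bar> \<le> \<bar>r\<bar> * M" "\<bar>\<mu> * c\<bar> \<le> \<bar>\<mu>\<bar>*M"
      "\<bar>\<alpha>1 * b1\<bar> \<le> \<bar>\<alpha>1\<bar> * M" "\<bar>\<alpha>2 * b2\<bar> \<le> \<bar>\<alpha>2\<bar> * M"
      using ab by (simp_all only: abs_mult; intro mult_left_mono; simp)+
    have p2: "\<bar>k * b2 * c\<bar> \<le> \<bar>k\<bar>*M*M"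
    proof -
      have "\<bar>b2\<bar> * \<bar>c\<bar> \<le> M * M" using ab by (intro mult_mono) auto
      then have "\<bar>k\<bar> * (\<bar>b2\<bar> * \<bar>c\<bar>) \<le> \<bar>k\<bar> * (M * M)" by (intro mult_left_mono) auto
      then show ?thesis by (simp add: abs_mult mult.assoc)
    qed
    have c1: "\<bar>\<Lambda> - F1 a b1 - F2 a b2 - lam * a\<bar> \<le> \<bar>\<Lambda>\<bar> + 4*K*M + \<bar>lam\<bar>*M"
      using f1 p(1) by arith
    have c2: "\<bar>r * a - (\<mu> + k * b2) * c\<bar> \<le> \<bar>r\<bar>*M + \<bar>\<mu>\<bar>*M + \<bar>k\<bar>*M*M"
    proof -
      have "r * a - (\<mu> + k * b2) * c = r * a - \<mu> * c - k * b2 * c" by (simp add: algebra_simps)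
      then show ?thesis using p(2,3) p2 by arith
    qed
    have c3: "\<bar>F1 a b1 - \<alpha>1 * b1\<bar> \<le> 2*K*M + \<bar>\<alpha>1\<bar>*M" using f1 p(4) by arith
    have c4: "\<bar>F2 a b2 + k * b2 * c - \<alpha>2 * b2\<bar> \<le> 2*K*M + \<bar>k\<bar>*M*M + \<bar>\<alpha>2\<bar>*M"
      using f1 p(5) p2 by arith
    have "norm (G z) \<le> \<bar>\<Lambda> - F1 a b1 - F2 a b2 - lam * a\<bar> + \<bar>r * a - (\<mu> + k * b2) * c\<bar>
                   + \<bar>F1 a b1 - \<alpha>1 * b1\<bar> + \<bar>F2 a b2 + k * b2 * c - \<alpha>2 * b2\<bar>"
      unfolding Gz[OF a_def c_def b1_def b2_def] by (rule norm4_le)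
    also have "\<dots> \<le> B" unfolding B_def using c1 c2 c3 c4 by linarith
    finally show ?thesis .
  qed
  have lip: "norm (G z - G w) \<le> L * norm (z - w)" for z w
  proof -
    define a where "a = cl M (fst z)"
    define c where "c = cl M (fst (snd z))"
    define b1 where "b1 = cl M (fst (snd (snd z)))"
    define b2 where "b2 = cl M (snd (snd (snd z)))"
    define a' where "a' = cl M (fst w)"
    define c' where "c' = cl M (fst (snd w))"
    define b1' where "b1' = cl M (fst (snd (snd w)))"
    define b2' where "b2' = cl M (snd (snd (snd w)))"
    define n where "n = norm (z - w)"
    have r: "a \<in> {0..M}" "c \<in> {0..M}" "b1 \<in> {0..M}" "b2 \<in> {0..M}"
       "a' \<in> {0..M}" "c' \<in> {0..M}" "b1' \<in> {0..M}" "b2' \<in> {0..M}"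
      using cl_range[OF M] by (auto simp: a_def c_def b1_def b2_def a'_def c'_def b1'_def b2'_def)
    have d: "\<bar>a - a'\<bar> \<le> n" "\<bar>c - c'\<bar> \<le> n" "\<bar>b1 - b1'\<bar> \<le> n" "\<bar>b2 - b2'\<bar> \<le> n"
      unfolding a_def a'_def c_def c'_def b1_def b1'_def b2_def b2'_def n_def
      using cl_lip comps_le[of "z - w"] by (auto intro: order_trans)
    have n0: "0 \<le> n" by (simp add: n_def)
    have f1: "\<bar>F1 a b1 - F1 a' b1'\<bar> \<le> 2*K*n" "\<bar>F2 a b2 - F2 a' b2'\<bar> \<le> 2*K*n"
    proof -
      have "\<bar>F1 a b1 - F1 a' b1'\<bar> \<le> K * (\<bar>a - a'\<bar> + \<bar>b1 - b1'\<bar>)" using L1 r by auto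
      also have "\<dots> \<le> K * (n + n)" using d K by (intro mult_left_mono) auto
      finally show "\<bar>F1 a b1 - F1 a' b1'\<bar> \<le> 2*K*n" by simp
      have "\<bar>F2 a b2 - F2 a' b2'\<bar> \<le> K * (\<bar>a - a'\<bar> + \<bar>b2 - b2'\<bar>)" using L2 r by auto
      also have "\<dots> \<le> K * (n + n)" using d K by (intro mult_left_mono) auto
      finally show "\<bar>F2 a b2 - F2 a' b2'\<bar> \<le> 2*K*n" by simp
    qed
    have prod: "\<bar>b2 * c - b2' * c'\<bar> \<le> 2 * M * n"
    proof -
      have "b2 * c - b2' * c' = b2 * (c - c') + c' * (b2 - b2')" by (simp add: algebra_simps)
      then have "\<bar>b2 * c - b2' * c'\<bar> \<le> \<bar>b2\<bar> * \<bar>c - c'\<bar> + \<bar>c'\<bar> * \<bar>b2 - b2'\<bar>"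
        by (simp add: abs_mult[symmetric] abs_triangle_ineq)
      also have "\<dots> \<le> M * n + M * n"
        using r d by (intro add_mono mult_mono) auto
      finally show ?thesis by simp
    qed
    have p: "\<bar>lam * a - lam * a'\<bar> \<le> \<bar>lam\<bar> * n" "\<bar>r * a - r * a'\<bar> \<le> \<bar>r\<bar> * n"
      "\<bar>\<mu> * c - \<mu> * c'\<bar> \<le> \<bar>\<mu>\<bar> * n" "\<bar>k * b2 * c - k * b2' * c'\<bar> \<le> \<bar>k\<bar> * (2 * M * n)"
      "\<bar>\<alpha>1 * b1 - \<alpha>1 * b1'\<bar> \<le> \<bar>\<alpha>1\<bar> * n" "\<bar>\<alpha>2 * b2 - \<alpha>2 * b2'\<bar> \<le> \<bar>\<alpha>2\<bar> * n"
      using d prod by (simp_all only: mult.assoc right_diff_distrib[symmetric] abs_mult; intro mult_left_mono; simp)+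
    have c1: "\<bar>(\<Lambda> - F1 a b1 - F2 a b2 - lam * a) - (\<Lambda> - F1 a' b1' - F2 a' b2' - lam * a')\<bar> \<le> 4*K*n + \<bar>lam\<bar>*n"
      using f1 p(1) by arith
    have c2: "\<bar>(r * a - (\<mu> + k * b2) * c) - (r * a' - (\<mu> + k * b2') * c')\<bar> \<le> \<bar>r\<bar>*n + \<bar>\<mu>\<bar>*n + \<bar>k\<bar>*(2*M*n)"
    proof -
      have "(r * a - (\<mu> + k * b2) * c) - (r * a' - (\<mu> + k * b2') * c') = (r * a - r * a') - (\<mu> * c - \<mu> * c') - (k * b2 * c - k * b2' * c')"
        by (simp add: algebra_simps)
      then show ?thesis using p(2,3,4) by arith
    qed
    have c3: "\<bar>(F1 a b1 - \<alpha>1 * b1) - (F1 a' b1' - \<alpha>1 * b1')\<bar> \<le> 2*K*n + \<bar>\<alpha>1\<bar>*n"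
      using f1 p(5) by arith
    have c4: "\<bar>(F2 a b2 + k * b2 * c - \<alpha>2 * b2) - (F2 a' b2' + k * b2' * c' - \<alpha>2 * b2')\<bar> \<le> 2*K*n + \<bar>k\<bar>*(2*M*n) + \<bar>\<alpha>2\<bar>*n"
      using f1 p(4,6) by arith
    have "G z - G w = ((\<Lambda> - F1 a b1 - F2 a b2 - lam * a) - (\<Lambda> - F1 a' b1' - F2 a' b2' - lam * a'),
        (r * a - (\<mu> + k * b2) * c) - (r * a' - (\<mu> + k * b2') * c'),
        (F1 a b1 - \<alpha>1 * b1) - (F1 a' b1' - \<alpha>1 * b1'),
        (F2 a b2 + k * b2 * c - \<alpha>2 * b2) - (F2 a' b2' + k * b2' * c' - \<alpha>2 * b2'))"
      unfolding Gz[OF a_def c_def b1_def b2_def] Gz[OF a'_def c'_def b1'_def b2'_def] by simp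
    then have "norm (G z - G w) \<le> \<bar>(\<Lambda> - F1 a b1 - F2 a b2 - lam * a) - (\<Lambda> - F1 a' b1' - F2 a' b2' - lam * a')\<bar>
        + \<bar>(r * a - (\<mu> + k * b2) * c) - (r * a' - (\<mu> + k * b2') * c')\<bar>
        + \<bar>(F1 a b1 - \<alpha>1 * b1) - (F1 a' b1' - \<alpha>1 * b1')\<bar>
        + \<bar>(F2 a b2 + k * b2 * c - \<alpha>2 * b2) - (F2 a' b2' + k * b2' * c' - \<alpha>2 * b2')\<bar>"
      using norm4_le by metis
    also have "\<dots> \<le> (4*K*n + \<bar>lam\<bar>*n) + (\<bar>r\<bar>*n + \<bar>\<mu>\<bar>*n + \<bar>k\<bar>*(2*M*n)) + (2*K*n + \<bar>\<alpha>1\<bar>*n)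
        + (2*K*n + \<bar>k\<bar>*(2*M*n) + \<bar>\<alpha>2\<bar>*n)"
      using c1 c2 c3 c4 by linarith
    also have "\<dots> = L * n" unfolding L_def by (simp add: algebra_simps)
    finally show ?thesis by (simp add: n_def)
  qed
  have "0 \<le> L" unfolding L_def using K M by simp
  with bnd lip show ?thesis by blast
qed

lemma mvt_ex:
  fixes y y' :: "real \<Rightarrow> real"
  assumes cont: "continuous_on {0..} y" and der: "\<And>t. 0 < t \<Longrightarrow> (y has_real_derivative y' t) (at t)"
    and a: "0 \<le> a" "a < b"
  shows "\<exists>z. a < z \<and> z < b \<and> y b - y a = (b - a) * y' z"
proof -
  have "continuous_on {a..b} y" by (rule continuous_on_subset[OF cont]) (use a in auto)
  moreover have "y differentiable (at x)" if "a < x" "x < b" for x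
    using der[of x] that a real_differentiable_def by force
  ultimately obtain l z where z: "a < z" "z < b" "DERIV y z :> l" "y b - y a = (b - a) * l"
    using MVT[OF a(2)] by blast
  have "l = y' z" using DERIV_unique[OF z(3) der[of z]] z a by auto
  with z show ?thesis by blast
qed

lemma nonincr:
  fixes y y' :: "real \<Rightarrow> real"
  assumes cont: "continuous_on {0..} y" and der: "\<And>t. 0 < t \<Longrightarrow> (y has_real_derivative y' t) (at t)"
    and neg: "\<And>t. 0 < t \<Longrightarrow> y' t \<le> 0" and a: "0 \<le> a" "a \<le> b"
  shows "y b \<le> y a"
proof (cases "a = b")
  case False
  then have "a < b" using a by auto
  then obtain z where z: "a < z" "z < b" "y b - y a = (b - a) * y' z"
    using mvt_ex[OF cont der a(1)] by blast
  have "(b - a) * y' z \<le> 0" using neg[of z] z a by (intro mult_nonneg_nonpos) auto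
  with z show ?thesis by simp
qed simp

lemma barrier_le:
  fixes y y' :: "real \<Rightarrow> real"
  assumes cont: "continuous_on {0..} y" and der: "\<And>t. 0 < t \<Longrightarrow> (y has_real_derivative y' t) (at t)"
    and y0: "y 0 \<le> M" and neg: "\<And>t. 0 < t \<Longrightarrow> M < y t \<Longrightarrow> y' t \<le> 0"
    and t: "0 \<le> t"
  shows "y t \<le> M"
proof (rule ccontr)
  assume "\<not> y t \<le> M"
  then have yt: "M < y t" by simp
  define T where "T = {s \<in> {0..t}. y s \<le> M}"
  have "closed T" unfolding T_def
    by (intro continuous_on_closed_Collect_le continuous_on_subset[OF cont] continuous_on_const) auto
  then have cT: "compact T" unfolding compact_eq_bounded_closed
    by (auto intro: bounded_subset[of "{0..t}"] simp: T_def)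
  moreover have "0 \<in> T" using y0 t by (simp add: T_def)
  then have nT: "T \<noteq> {}" by auto
  from compact_attains_sup[OF cT nT] obtain t0 where t0: "t0 \<in> T" "\<And>s. s \<in> T \<Longrightarrow> s \<le> t0"
    by blast
  have t0a: "0 \<le> t0" "t0 \<le> t" "y t0 \<le> M" using t0(1) by (simp_all add: T_def)
  have "t0 \<noteq> t" using t0a(3) yt by auto
  then have t0t: "0 \<le> t0" "t0 < t" "y t0 \<le> M" using t0a by auto
  obtain z where z: "t0 < z" "z < t" "y t - y t0 = (t - t0) * y' z"
    using mvt_ex[OF cont der t0t(1,2)] by blast
  have "M < y z"
  proof (rule ccontr)
    assume "\<not> M < y z"
    then have "z \<in> T" using z t0t by (auto simp: T_def)
    with t0(2) z show False by fastforce
  qed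
  then have "y' z \<le> 0" using neg z t0t by auto
  then have "(t - t0) * y' z \<le> 0" using z by (intro mult_nonneg_nonpos) auto
  with z t0t yt show False by linarith
qed

lemma barrier_lt:
  fixes y y' :: "real \<Rightarrow> real"
  assumes cont: "continuous_on {0..} y" and der: "\<And>t. 0 < t \<Longrightarrow> (y has_real_derivative y' t) (at t)"
    and y0: "y 0 < M" and neg: "\<And>t. 0 < t \<Longrightarrow> y t \<le> M \<Longrightarrow> y' t \<le> 0"
    and t: "0 \<le> t"
  shows "y t < M"
proof (rule ccontr)
  assume "\<not> y t < M"
  then have yt: "M \<le> y t" by simp
  define T where "T = {s \<in> {0..t}. M \<le> y s}"
  have "closed T" unfolding T_def
    by (intro continuous_on_closed_Collect_le continuous_on_subset[OF cont] continuous_on_const) auto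
  then have cT: "compact T" unfolding compact_eq_bounded_closed
    by (auto intro: bounded_subset[of "{0..t}"] simp: T_def)
  moreover have "t \<in> T" using yt t by (simp add: T_def)
  then have nT: "T \<noteq> {}" by auto
  from compact_attains_inf[OF cT nT] obtain t0 where t0: "t0 \<in> T" "\<And>s. s \<in> T \<Longrightarrow> t0 \<le> s"
    by blast
  have t0a: "0 \<le> t0" "M \<le> y t0" using t0(1) by (simp_all add: T_def)
  have "t0 \<noteq> 0" using t0a(2) y0 by auto
  then have t0t: "0 < t0" "M \<le> y t0" using t0a by auto
  obtain z where z: "0 < z" "z < t0" "y t0 - y 0 = (t0 - 0) * y' z"
    using mvt_ex[OF cont der _ t0t(1)] by auto
  have "y z < M"
  proof (rule ccontr)
    assume "\<not> y z < M"
    then have "z \<in> T" using z t0 by (auto simp: T_def)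
    with t0(2) z show False by fastforce
  qed
  then have "y' z \<le> 0" using neg z by auto
  then have "(t0 - 0) * y' z \<le> 0" using z by (intro mult_nonneg_nonpos) auto
  with z t0t y0 show False by linarith
qed

lemma comp_derivs:
  fixes x :: "real \<Rightarrow> real \<times> real \<times> real \<times> real"
  assumes d: "(x has_vector_derivative v) (at t within {0..})" and t: "0 < t"
  shows "((\<lambda>t. fst (x t)) has_real_derivative fst v) (at t)"
    "((\<lambda>t. fst (snd (x t))) has_real_derivative fst (snd v)) (at t)"
    "((\<lambda>t. fst (snd (snd (x t)))) has_real_derivative fst (snd (snd v))) (at t)"
    "((\<lambda>t. snd (snd (snd (x t)))) has_real_derivative snd (snd (snd v))) (at t)"
proof -
  have "at t within {0..} = at t" using t by (intro at_within_interior) auto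
  with d have d': "(x has_vector_derivative v) (at t)" by simp
  note f = bounded_linear.has_vector_derivative[OF bounded_linear_fst]
  note s = bounded_linear.has_vector_derivative[OF bounded_linear_snd]
  show "((\<lambda>t. fst (x t)) has_real_derivative fst v) (at t)"
    "((\<lambda>t. fst (snd (x t))) has_real_derivative fst (snd v)) (at t)"
    "((\<lambda>t. fst (snd (snd (x t)))) has_real_derivative fst (snd (snd v))) (at t)"
    "((\<lambda>t. snd (snd (snd (x t)))) has_real_derivative snd (snd (snd v))) (at t)"
    unfolding has_real_derivative_iff_has_vector_derivative
    by (rule f s f[OF s] s[OF s] f[OF s[OF s]] s[OF s[OF s]] d')+
qed

lemma cl_id: "0 \<le> y \<Longrightarrow> y \<le> M \<Longrightarrow> cl M y = y" by (simp add: cl_def)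
lemma cl_neg: "0 \<le> M \<Longrightarrow> y \<le> 0 \<Longrightarrow> cl M y = 0" by (simp add: cl_def)
lemma cl_big: "0 \<le> M \<Longrightarrow> M \<le> y \<Longrightarrow> cl M y = M" by (simp add: cl_def)

lemma exist_sol:
  fixes \<Lambda> \<mu> r k \<gamma>1 \<gamma>2 v1 v2 :: real and F1 f1 F2 f2 :: "real \<Rightarrow> real \<Rightarrow> real"
  assumes pos: "\<Lambda> > 0" "\<mu> > 0" "r > 0" "k > 0" "\<gamma>1 > 0" "\<gamma>2 > 0" "v1 \<ge> 0" "v2 \<ge> 0"
    and inc: "incidence_ok F1 f1" "incidence_ok F2 f2"
    and z0: "z0 \<in> orthant4"
  shows "\<exists>x. is_solution (model_rhs \<Lambda> \<mu> r k \<gamma>1 \<gamma>2 v1 v2 F1 F2) orthant4 x \<and> x 0 = z0"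
proof -
  define X where "X = model_rhs \<Lambda> \<mu> r k \<gamma>1 \<gamma>2 v1 v2 F1 F2"
  have z0c: "0 \<le> fst z0" "0 \<le> fst (snd z0)" "0 \<le> fst (snd (snd z0))" "0 \<le> snd (snd (snd z0))"
    using z0 by (auto simp: orthant4_def split: prod.splits)
  define M where "M = fst z0 + fst (snd z0) + fst (snd (snd z0)) + snd (snd (snd z0)) + \<Lambda> / \<mu> + 1"
  have M0: "0 \<le> M" using z0c pos by (simp add: M_def)
  have MM: "\<Lambda> < \<mu> * M"
  proof -
    have "\<mu> * (\<Lambda> / \<mu> + 1) \<le> \<mu> * M" using z0c pos by (intro mult_left_mono) (auto simp: M_def)
    moreover have "\<mu> * (\<Lambda> / \<mu> + 1) = \<Lambda> + \<mu>" using pos by (simp add: field_simps)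
    ultimately show ?thesis using pos by linarith
  qed
  have F0: "\<And>S. S \<ge> 0 \<Longrightarrow> F1 S 0 = 0" "\<And>I. I \<ge> 0 \<Longrightarrow> F1 0 I = 0"
    "\<And>S. S \<ge> 0 \<Longrightarrow> F2 S 0 = 0" "\<And>I. I \<ge> 0 \<Longrightarrow> F2 0 I = 0"
    using inc by (auto simp: incidence_ok_def)
  have C1: "C2_on_quadrant F1" "C2_on_quadrant F2" using inc unfolding incidence_ok_def by simp_all
  obtain K1 where K1: "K1 \<ge> 0" "\<forall>a b a' b'. a \<in> {0..M} \<longrightarrow> b \<in> {0..M} \<longrightarrow> a' \<in> {0..M} \<longrightarrow> b' \<in> {0..M} \<longrightarrow>
           \<bar>F1 a b - F1 a' b'\<bar> \<le> K1 * (\<bar>a - a'\<bar> + \<bar>b - b'\<bar>)"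
    using C2_quadrant_lip[OF C1(1) M0] by blast
  obtain K2 where K2: "K2 \<ge> 0" "\<forall>a b a' b'. a \<in> {0..M} \<longrightarrow> b \<in> {0..M} \<longrightarrow> a' \<in> {0..M} \<longrightarrow> b' \<in> {0..M} \<longrightarrow>
           \<bar>F2 a b - F2 a' b'\<bar> \<le> K2 * (\<bar>a - a'\<bar> + \<bar>b - b'\<bar>)"
    using C2_quadrant_lip[OF C1(2) M0] by blast
  define K where "K = max K1 K2"
  have K0: "0 \<le> K" using K1 by (simp add: K_def)
  have KL: "\<bar>F a b - F a' b'\<bar> \<le> K * (\<bar>a - a'\<bar> + \<bar>b - b'\<bar>)"
    if "Ki \<le> K" "\<bar>F a b - F a' b'\<bar> \<le> Ki * (\<bar>a - a'\<bar> + \<bar>b - b'\<bar>)" for F :: "real \<Rightarrow> real \<Rightarrow> real" and Ki a b a' b'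
  proof -
    have "Ki * (\<bar>a - a'\<bar> + \<bar>b - b'\<bar>) \<le> K * (\<bar>a - a'\<bar> + \<bar>b - b'\<bar>)"
      using that(1) by (intro mult_right_mono) auto
    with that(2) show ?thesis by linarith
  qed
  have L1: "\<bar>F1 a b - F1 a' b'\<bar> \<le> K * (\<bar>a - a'\<bar> + \<bar>b - b'\<bar>)"
    if "a \<in> {0..M}" "b \<in> {0..M}" "a' \<in> {0..M}" "b' \<in> {0..M}" for a b a' b'
    by (rule KL[of K1]) (use K1(2) that in \<open>auto simp: K_def\<close>)
  have L2: "\<bar>F2 a b - F2 a' b'\<bar> \<le> K * (\<bar>a - a'\<bar> + \<bar>b - b'\<bar>)"
    if "a \<in> {0..M}" "b \<in> {0..M}" "a' \<in> {0..M}" "b' \<in> {0..M}" for a b a' b'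
    by (rule KL[of K2]) (use K2(2) that in \<open>auto simp: K_def\<close>)
  have F00: "F1 0 0 = 0" "F2 0 0 = 0" using F0 by auto
  obtain B L where BL: "0 \<le> L" "\<And>z. norm (X (clamp4 M z)) \<le> B"
    "\<And>z w. norm (X (clamp4 M z) - X (clamp4 M w)) \<le> L * norm (z - w)"
    using trunc_field[OF M0 K0 L1 L2 F00, of \<Lambda> \<mu> r k \<gamma>1 \<gamma>2 v1 v2] unfolding X_def by blast
  obtain x where x0: "x 0 = z0" and xd: "\<And>t. t \<ge> 0 \<Longrightarrow> (x has_vector_derivative X (clamp4 M (x t))) (at t within {0..})"
    using picard_exists[of "\<lambda>z. X (clamp4 M z)" B L z0] BL by blast
  have xc: "continuous_on {0..} x"
    by (rule continuous_on_vector_derivative) (use xd in auto)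
  define s where "s t = fst (x t)" for t
  define v where "v t = fst (snd (x t))" for t
  define i where "i t = fst (snd (snd (x t)))" for t
  define j where "j t = snd (snd (snd (x t)))" for t
  have xe: "x t = (s t, v t, i t, j t)" for t by (simp add: s_def v_def i_def j_def)
  have sc: "continuous_on {0..} s" "continuous_on {0..} v" "continuous_on {0..} i" "continuous_on {0..} j"
    unfolding s_def v_def i_def j_def by (intro continuous_intros xc)+
  define lam where "lam = r + \<mu>"
  define \<alpha>1 where "\<alpha>1 = \<gamma>1 + v1 + \<mu>"
  define \<alpha>2 where "\<alpha>2 = \<gamma>2 + v2 + \<mu>"
  define a where "a t = cl M (s t)" for t
  define c where "c t = cl M (v t)" for t
  define b1 where "b1 t = cl M (i t)" for t
  define b2 where "b2 t = cl M (j t)" for t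
  have cr: "a t \<in> {0..M}" "c t \<in> {0..M}" "b1 t \<in> {0..M}" "b2 t \<in> {0..M}" for t
    using cl_range[OF M0] by (auto simp: a_def c_def b1_def b2_def)
  have Gx: "X (clamp4 M (x t)) = (\<Lambda> - F1 (a t) (b1 t) - F2 (a t) (b2 t) - lam * a t,
      r * a t - (\<mu> + k * b2 t) * c t, F1 (a t) (b1 t) - \<alpha>1 * b1 t,
      F2 (a t) (b2 t) + k * b2 t * c t - \<alpha>2 * b2 t)" for t
    by (simp add: X_def model_rhs_def clamp4_def xe a_def c_def b1_def b2_def lam_def \<alpha>1_def \<alpha>2_def)
  have ds: "(s has_real_derivative (\<Lambda> - F1 (a t) (b1 t) - F2 (a t) (b2 t) - lam * a t)) (at t)"
    and dv: "(v has_real_derivative (r * a t - (\<mu> + k * b2 t) * c t)) (at t)"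
    and di: "(i has_real_derivative (F1 (a t) (b1 t) - \<alpha>1 * b1 t)) (at t)"
    and dj: "(j has_real_derivative (F2 (a t) (b2 t) + k * b2 t * c t - \<alpha>2 * b2 t)) (at t)"
    if "0 < t" for t
    using comp_derivs[OF xd[of t] that] that unfolding Gx s_def[abs_def] v_def[abs_def] i_def[abs_def] j_def[abs_def]
    by auto
  have sneg: "0 \<le> s t" if "0 \<le> t" for t
  proof -
    have "(\<lambda>t. - s t) t \<le> 0"
    proof (rule barrier_le[where y = "\<lambda>t. - s t" and y' = "\<lambda>t. - (\<Lambda> - F1 (a t) (b1 t) - F2 (a t) (b2 t) - lam * a t)"])
      show "continuous_on {0..} (\<lambda>t. - s t)" by (intro continuous_intros sc)
      show "((\<lambda>t. - s t) has_real_derivative - (\<Lambda> - F1 (a t) (b1 t) - F2 (a t) (b2 t) - lam * a t)) (at t)"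
        if "0 < t" for t using ds[OF that] by (rule DERIV_minus)
      show "- s 0 \<le> 0" using z0c x0 by (simp add: s_def)
      show "- (\<Lambda> - F1 (a t) (b1 t) - F2 (a t) (b2 t) - lam * a t) \<le> 0" if "0 < t" "0 < - s t" for t
      proof -
        have "a t = 0" using that M0 by (simp add: a_def cl_neg)
        moreover have "F1 0 (b1 t) = 0" "F2 0 (b2 t) = 0" using F0 cr by auto
        ultimately show ?thesis using pos by simp
      qed
    qed (use that in auto)
    then show ?thesis by simp
  qed
  have vneg: "0 \<le> v t" if "0 \<le> t" for t
  proof -
    have "(\<lambda>t. - v t) t \<le> 0"
    proof (rule barrier_le[where y = "\<lambda>t. - v t" and y' = "\<lambda>t. - (r * a t - (\<mu> + k * b2 t) * c t)"])
      show "continuous_on {0..} (\<lambda>t. - v t)" by (intro continuous_intros sc)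
      show "((\<lambda>t. - v t) has_real_derivative - (r * a t - (\<mu> + k * b2 t) * c t)) (at t)"
        if "0 < t" for t using dv[OF that] by (rule DERIV_minus)
      show "- v 0 \<le> 0" using z0c x0 by (simp add: v_def)
      show "- (r * a t - (\<mu> + k * b2 t) * c t) \<le> 0" if "0 < t" "0 < - v t" for t
      proof -
        have "c t = 0" using that M0 by (simp add: c_def cl_neg)
        then show ?thesis using pos cr[of t] by simp
      qed
    qed (use that in auto)
    then show ?thesis by simp
  qed
  have ineg: "0 \<le> i t" if "0 \<le> t" for t
  proof -
    have "(\<lambda>t. - i t) t \<le> 0"
    proof (rule barrier_le[where y = "\<lambda>t. - i t" and y' = "\<lambda>t. - (F1 (a t) (b1 t) - \<alpha>1 * b1 t)"])
      show "continuous_on {0..} (\<lambda>t. - i t)" by (intro continuous_intros sc)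
      show "((\<lambda>t. - i t) has_real_derivative - (F1 (a t) (b1 t) - \<alpha>1 * b1 t)) (at t)"
        if "0 < t" for t using di[OF that] by (rule DERIV_minus)
      show "- i 0 \<le> 0" using z0c x0 by (simp add: i_def)
      show "- (F1 (a t) (b1 t) - \<alpha>1 * b1 t) \<le> 0" if "0 < t" "0 < - i t" for t
      proof -
        have "b1 t = 0" using that M0 by (simp add: b1_def cl_neg)
        then show ?thesis using F0 cr[of t] by simp
      qed
    qed (use that in auto)
    then show ?thesis by simp
  qed
  have jneg: "0 \<le> j t" if "0 \<le> t" for t
  proof -
    have "(\<lambda>t. - j t) t \<le> 0"
    proof (rule barrier_le[where y = "\<lambda>t. - j t" and y' = "\<lambda>t. - (F2 (a t) (b2 t) + k * b2 t * c t - \<alpha>2 * b2 t)"])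
      show "continuous_on {0..} (\<lambda>t. - j t)" by (intro continuous_intros sc)
      show "((\<lambda>t. - j t) has_real_derivative - (F2 (a t) (b2 t) + k * b2 t * c t - \<alpha>2 * b2 t)) (at t)"
        if "0 < t" for t using dj[OF that] by (rule DERIV_minus)
      show "- j 0 \<le> 0" using z0c x0 by (simp add: j_def)
      show "- (F2 (a t) (b2 t) + k * b2 t * c t - \<alpha>2 * b2 t) \<le> 0" if "0 < t" "0 < - j t" for t
      proof -
        have "b2 t = 0" using that M0 by (simp add: b2_def cl_neg)
        then show ?thesis using F0 cr[of t] by simp
      qed
    qed (use that in auto)
    then show ?thesis by simp
  qed
  have Nle: "s t + v t + i t + j t \<le> M" if "0 \<le> t" for t
  proof (rule barrier_le[where y = "\<lambda>t. s t + v t + i t + j t"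
        and y' = "\<lambda>t. \<Lambda> - \<mu> * a t - \<mu> * c t - \<alpha>1 * b1 t - \<alpha>2 * b2 t"])
    show "continuous_on {0..} (\<lambda>t. s t + v t + i t + j t)" by (intro continuous_intros sc)
    show "((\<lambda>t. s t + v t + i t + j t) has_real_derivative \<Lambda> - \<mu> * a t - \<mu> * c t - \<alpha>1 * b1 t - \<alpha>2 * b2 t) (at t)"
      if "0 < t" for t
    proof -
      have "((\<lambda>t. s t + v t + i t + j t) has_real_derivative
         (\<Lambda> - F1 (a t) (b1 t) - F2 (a t) (b2 t) - lam * a t) + (r * a t - (\<mu> + k * b2 t) * c t)
          + (F1 (a t) (b1 t) - \<alpha>1 * b1 t) + (F2 (a t) (b2 t) + k * b2 t * c t - \<alpha>2 * b2 t)) (at t)"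
        by (intro DERIV_add ds dv di dj that)
      then show ?thesis by (simp add: lam_def algebra_simps)
    qed
    show "s 0 + v 0 + i 0 + j 0 \<le> M" using x0 pos by (simp add: M_def s_def v_def i_def j_def)
    show "\<Lambda> - \<mu> * a t - \<mu> * c t - \<alpha>1 * b1 t - \<alpha>2 * b2 t \<le> 0"
      if t: "0 < t" "M < s t + v t + i t + j t" for t
    proof -
      have nn: "0 \<le> s t" "0 \<le> v t" "0 \<le> i t" "0 \<le> j t" using sneg vneg ineg jneg t by auto
      have sumM: "M \<le> a t + c t + b1 t + b2 t"
      proof (cases "s t \<le> M \<and> v t \<le> M \<and> i t \<le> M \<and> j t \<le> M")
        case True
        then have "a t = s t" "c t = v t" "b1 t = i t" "b2 t = j t"
          using nn by (auto simp: a_def c_def b1_def b2_def cl_id)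
        then show ?thesis using t by simp
      next
        case False
        then have "M \<le> a t \<or> M \<le> c t \<or> M \<le> b1 t \<or> M \<le> b2 t"
          using M0 by (auto simp: a_def c_def b1_def b2_def cl_big)
        then show ?thesis using cr[of t] by auto
      qed
      have "\<mu> * b1 t \<le> \<alpha>1 * b1 t" "\<mu> * b2 t \<le> \<alpha>2 * b2 t"
        using cr[of t] pos by (auto simp: \<alpha>1_def \<alpha>2_def intro!: mult_right_mono)
      moreover have "\<mu> * M \<le> \<mu> * (a t + c t + b1 t + b2 t)" using sumM pos by (intro mult_left_mono) auto
      ultimately show ?thesis using MM by (simp add: algebra_simps)
    qed
  qed (use that in auto)
  have inbox: "0 \<le> s t \<and> s t \<le> M \<and> 0 \<le> v t \<and> v t \<le> M \<and> 0 \<le> i t \<and> i t \<le> M \<and> 0 \<le> j t \<and> j t \<le> M"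
    if "0 \<le> t" for t
    using sneg[OF that] vneg[OF that] ineg[OF that] jneg[OF that] Nle[OF that] by linarith
  have "is_solution X orthant4 x"
    unfolding is_solution_def
  proof (intro allI impI conjI)
    fix t :: real assume t: "0 \<le> t"
    show "x t \<in> orthant4" using inbox[OF t] by (simp add: orthant4_def xe)
    have "clamp4 M (x t) = x t" using inbox[OF t]
      by (simp add: clamp4_def xe cl_id)
    then show "(x has_vector_derivative X (x t)) (at t within {0..})" using xd[OF t] by simp
  qed
  with x0 show ?thesis unfolding X_def by blast
qed

lemma inc_props:
  assumes inc: "incidence_ok F f" and S0: "S0 > 0"
  shows "deriv (\<lambda>I. F S0 I) 0 = f S0 0" "isCont (\<lambda>p. f (fst p) (snd p)) (S0, 0)"
proof -
  have C: "C2_on_quadrant F" "C2_on_quadrant f" using inc unfolding incidence_ok_def by simp_all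
  have Ff: "\<And>S I. S \<ge> 0 \<Longrightarrow> I \<ge> 0 \<Longrightarrow> F S I = I * f S I" using inc unfolding incidence_ok_def by simp
  have F0: "F S0 0 = 0" using inc S0 unfolding incidence_ok_def by simp
  have p: "(S0, 0::real) \<in> {p. fst p \<ge> 0 \<and> snd p \<ge> 0}" using S0 by simp
  obtain U g' where U: "{p. fst p \<ge> 0 \<and> snd p \<ge> 0} \<subseteq> U"
    and d1: "\<And>p. p \<in> U \<Longrightarrow> ((\<lambda>p. f (fst p) (snd p)) has_derivative blinfun_apply (g' p)) (at p)"
    using C(2) unfolding C2_on_quadrant_def C2_on_def by blast
  show cf: "isCont (\<lambda>p. f (fst p) (snd p)) (S0, 0)"
    using d1 U p has_derivative_continuous by blast
  obtain V h' where V: "{p. fst p \<ge> 0 \<and> snd p \<ge> 0} \<subseteq> V"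
    and e1: "\<And>p. p \<in> V \<Longrightarrow> ((\<lambda>p. F (fst p) (snd p)) has_derivative blinfun_apply (h' p)) (at p)"
    using C(1) unfolding C2_on_quadrant_def C2_on_def by blast
  have "((\<lambda>I. (S0, I)) has_derivative (\<lambda>h. (0, h))) (at 0)"
    by (intro derivative_eq_intros) auto
  moreover have "(S0, 0::real) \<in> V" using V p by blast
  ultimately have "((\<lambda>I. F S0 I) has_derivative (\<lambda>h. blinfun_apply (h' (S0, 0)) (0, h))) (at 0)"
    using has_derivative_compose[of "\<lambda>I. (S0, I)" _ 0 UNIV] e1 by fastforce
  then have "(\<lambda>I. F S0 I) differentiable (at 0)" by (rule differentiableI)
  then have "DERIV (\<lambda>I. F S0 I) 0 :> deriv (\<lambda>I. F S0 I) 0"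
    by (simp add: DERIV_deriv_iff_real_differentiable)
  then have "((\<lambda>h. (F S0 h - F S0 0) / (h - 0)) \<longlongrightarrow> deriv (\<lambda>I. F S0 I) 0) (at 0)"
    by (simp add: has_field_derivative_iff)
  then have l1: "((\<lambda>h. (F S0 h - F S0 0) / (h - 0)) \<longlongrightarrow> deriv (\<lambda>I. F S0 I) 0) (at_right 0)"
    by (rule tendsto_within_subset) auto
  have "((\<lambda>h. (S0, h)) \<longlongrightarrow> (S0, 0)) (at_right (0::real))"
    by (intro tendsto_intros)
  from isCont_tendsto_compose[OF cf this]
  have l2: "((\<lambda>h. f S0 h) \<longlongrightarrow> f S0 0) (at_right 0)" by simp
  have "\<forall>\<^sub>F h in at_right 0. f S0 h = (F S0 h - F S0 0) / (h - 0)"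
    using eventually_at_right_less[of "0::real"]
    by eventually_elim (use Ff F0 S0 in auto)
  from Lim_transform_eventually[OF l2 this]
  have "((\<lambda>h. (F S0 h - F S0 0) / (h - 0)) \<longlongrightarrow> f S0 0) (at_right 0)" .
  from tendsto_unique[OF _ l1 this] show "deriv (\<lambda>I. F S0 I) 0 = f S0 0" by simp
qed

lemma growth:
  fixes y y' :: "real \<Rightarrow> real"
  assumes cont: "continuous_on {0..} y" and der: "\<And>t. 0 < t \<Longrightarrow> (y has_real_derivative y' t) (at t)"
    and ge: "\<And>t. 0 < t \<Longrightarrow> c * y t \<le> y' t" and t: "0 \<le> t"
  shows "y 0 * exp (c * t) \<le> y t"
proof -
  have "(\<lambda>t. - (y t * exp (- c * t))) t \<le> (\<lambda>t. - (y t * exp (- c * t))) 0"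
  proof (rule nonincr[where y = "\<lambda>t. - (y t * exp (- c * t))" and y' = "\<lambda>t. - (y' t * exp (- c * t) + exp (- c * t) * (- c) * y t)"])
    show "continuous_on {0..} (\<lambda>t. - (y t * exp (- c * t)))" by (intro continuous_intros cont)
    show "((\<lambda>t. - (y t * exp (- c * t))) has_real_derivative - (y' t * exp (- c * t) + exp (- c * t) * (- c) * y t)) (at t)"
      if "0 < t" for t
    proof -
      have d1: "(y has_real_derivative y' t) (at t)" by (rule der[OF that])
      have d2: "((\<lambda>t. exp (- c * t)) has_real_derivative exp (- c * t) * (- c)) (at t)"
        by (intro derivative_eq_intros) auto
      from DERIV_minus[OF DERIV_mult[OF d1 d2]] show ?thesis .
    qed
    show "- (y' t * exp (- c * t) + exp (- c * t) * (- c) * y t) \<le> 0" if "0 < t" for t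
    proof -
      have "0 \<le> (y' t - c * y t) * exp (- c * t)" using ge[OF that] by simp
      then show ?thesis by (simp add: algebra_simps)
    qed
  qed (use t in auto)
  then have "y 0 \<le> y t * exp (- c * t)" by simp
  then have "y 0 * exp (c * t) \<le> y t * exp (- c * t) * exp (c * t)" by (intro mult_right_mono) auto
  also have "\<dots> = y t" by (simp add: mult.assoc exp_add[symmetric])
  finally show ?thesis .
qed

lemma neg_le_abs_mult: "0 \<le> (P::real) \<Longrightarrow> - (u * P) \<le> \<bar>u\<bar> * P"
  by (metis abs_ge_minus_self minus_mult_left mult_right_mono)

lemma lyap_ineq:
  fixes S V I1 I2 f1v f2v \<Lambda> lam r \<mu> k A S0 V0 \<alpha>1 \<alpha>2 c \<rho> \<kappa> :: real
  assumes e\<Lambda>: "\<Lambda> = lam * S0" and erS: "r * S0 = \<mu> * V0" and eA: "A * r^2 = lam * \<mu>"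
    and pos: "0 < A" "0 < lam" "0 < \<mu>" "0 < k" "0 < c" "0 < r" "0 \<le> V0"
    and reg: "\<bar>S - S0\<bar> \<le> \<rho>" "\<bar>V - V0\<bar> \<le> \<rho>" "0 \<le> V" "0 \<le> I1" "I1 \<le> \<rho>" "0 \<le> I2" "I2 \<le> \<rho>"
    and fb: "0 \<le> f1v" "f1v \<le> \<alpha>1 - c" "0 \<le> f2v" "f2v + k * V \<le> \<alpha>2 - c"
    and \<rho>1: "\<rho> \<le> 1" and \<rho>c: "2 * \<rho> * (\<alpha>1 + \<alpha>2 + A * k * (V0 + 1)) \<le> c / 2"
    and \<kappa>: "\<kappa> = min lam (min \<mu> (c / 2))"
  shows "2 * (S - S0) * (\<Lambda> - I1 * f1v - I2 * f2v - lam * S)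
       + A * (2 * (V - V0) * (r * S - (\<mu> + k * I2) * V))
       + (I1 * f1v - \<alpha>1 * I1) + (I2 * f2v + k * I2 * V - \<alpha>2 * I2)
       \<le> - \<kappa> * ((S - S0)^2 + A * (V - V0)^2 + I1 + I2)"
proof -
  define u where "u = S - S0"
  define w where "w = V - V0"
  have e1: "\<Lambda> - I1 * f1v - I2 * f2v - lam * S = - lam * u - I1 * f1v - I2 * f2v"
    unfolding u_def e\<Lambda> by (simp add: algebra_simps)
  have e2: "r * S - (\<mu> + k * I2) * V = r * u - \<mu> * w - k * I2 * V"
    unfolding u_def w_def using erS by (simp add: algebra_simps)
  have LHS: "2 * (S - S0) * (\<Lambda> - I1 * f1v - I2 * f2v - lam * S)
       + A * (2 * (V - V0) * (r * S - (\<mu> + k * I2) * V))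
       + (I1 * f1v - \<alpha>1 * I1) + (I2 * f2v + k * I2 * V - \<alpha>2 * I2)
     = - 2 * (lam * u^2) - 2 * (u * (I1 * f1v)) - 2 * (u * (I2 * f2v)) + 2 * (A * r * (u * w))
       - 2 * (A * \<mu> * w^2) - 2 * (A * k * (w * (I2 * V))) + I1 * (f1v - \<alpha>1) + I2 * (f2v + k * V - \<alpha>2)"
    unfolding e1 e2 u_def[symmetric] w_def[symmetric] by (simp add: algebra_simps power2_eq_square)
  have u: "\<bar>u\<bar> \<le> \<rho>" and w: "\<bar>w\<bar> \<le> \<rho>" using reg by (simp_all add: u_def w_def)
  have \<rho>0: "0 \<le> \<rho>" using u by linarith
  have t1: "- (u * (I1 * f1v)) \<le> \<rho> * (\<alpha>1 * I1)"
  proof -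
    have P: "0 \<le> I1 * f1v" "I1 * f1v \<le> \<alpha>1 * I1"
      using reg fb pos by (auto simp: mult.commute intro!: mult_left_mono)
    have "- (u * (I1 * f1v)) \<le> \<bar>u\<bar> * (I1 * f1v)" using P by (intro neg_le_abs_mult) auto
    also have "\<dots> \<le> \<rho> * (I1 * f1v)" using u P by (intro mult_right_mono) auto
    also have "\<dots> \<le> \<rho> * (\<alpha>1 * I1)" using P \<rho>0 by (intro mult_left_mono) auto
    finally show ?thesis .
  qed
  have t2: "- (u * (I2 * f2v)) \<le> \<rho> * (\<alpha>2 * I2)"
  proof -
    have "f2v \<le> \<alpha>2" using fb reg pos by (smt (verit) mult_nonneg_nonneg)
    then have P: "0 \<le> I2 * f2v" "I2 * f2v \<le> \<alpha>2 * I2"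
      using reg fb pos by (auto simp: mult.commute intro!: mult_left_mono)
    have "- (u * (I2 * f2v)) \<le> \<bar>u\<bar> * (I2 * f2v)" using P by (intro neg_le_abs_mult) auto
    also have "\<dots> \<le> \<rho> * (I2 * f2v)" using u P by (intro mult_right_mono) auto
    also have "\<dots> \<le> \<rho> * (\<alpha>2 * I2)" using P \<rho>0 by (intro mult_left_mono) auto
    finally show ?thesis .
  qed
  have t3: "- (A * k * (w * (I2 * V))) \<le> \<rho> * (A * k * (V0 + 1) * I2)"
  proof -
    have V1: "V \<le> V0 + 1" using reg \<rho>1 by linarith
    have P: "0 \<le> I2 * V" "I2 * V \<le> (V0 + 1) * I2"
      using reg V1 by (auto simp: mult.commute intro!: mult_left_mono)
    have Ak: "0 \<le> A * k" using pos by simp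
    have "- (w * (I2 * V)) \<le> \<bar>w\<bar> * (I2 * V)" using P by (intro neg_le_abs_mult) auto
    also have "\<dots> \<le> \<rho> * ((V0 + 1) * I2)" by (rule mult_mono) (use w P \<rho>0 in auto)
    finally have "- (w * (I2 * V)) \<le> \<rho> * ((V0 + 1) * I2)" .
    then have "A * k * (- (w * (I2 * V))) \<le> A * k * (\<rho> * ((V0 + 1) * I2))"
      using Ak by (intro mult_left_mono) auto
    then show ?thesis by (simp add: algebra_simps)
  qed
  have t4: "2 * (A * r * (u * w)) \<le> lam * u^2 + A * \<mu> * w^2"
  proof -
    have "0 \<le> lam * (u - (A * r / lam) * w)^2" using pos by simp
    also have "lam * (u - (A * r / lam) * w)^2 = lam * u^2 - 2 * (A * r * (u * w)) + (A * (A * r^2) / lam) * w^2"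
      using pos by (simp add: field_simps power2_eq_square)
    also have "(A * (A * r^2) / lam) = A * \<mu>" using pos eA by (simp add: field_simps)
    finally show ?thesis by simp
  qed
  have t5: "I1 * (f1v - \<alpha>1) \<le> - c * I1"
  proof -
    have "I1 * (f1v - \<alpha>1) \<le> I1 * (- c)" using reg fb by (intro mult_left_mono) auto
    then show ?thesis by (simp add: mult.commute)
  qed
  have t6: "I2 * (f2v + k * V - \<alpha>2) \<le> - c * I2"
  proof -
    have "I2 * (f2v + k * V - \<alpha>2) \<le> I2 * (- c)" using reg fb by (intro mult_left_mono) auto
    then show ?thesis by (simp add: mult.commute)
  qed
  have t7: "2 * (\<rho> * (\<alpha>1 * I1)) \<le> c / 2 * I1"
  proof -
    have "2 * \<rho> * \<alpha>1 \<le> c / 2" using \<rho>c \<rho>0 pos fb reg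
      by (smt (verit, ccfv_SIG) mult_left_mono mult_nonneg_nonneg)
    then have "2 * \<rho> * \<alpha>1 * I1 \<le> c / 2 * I1" using reg by (intro mult_right_mono) auto
    then show ?thesis by (simp add: algebra_simps)
  qed
  have t8: "2 * (\<rho> * (\<alpha>2 * I2)) + 2 * (\<rho> * (A * k * (V0 + 1) * I2)) \<le> c / 2 * I2"
  proof -
    have a1: "0 \<le> \<alpha>1" using fb pos by linarith
    have "2 * \<rho> * (\<alpha>2 + A * k * (V0 + 1)) \<le> c / 2" using \<rho>c \<rho>0 a1
      by (smt (verit, ccfv_SIG) mult_left_mono)
    then have "2 * \<rho> * (\<alpha>2 + A * k * (V0 + 1)) * I2 \<le> c / 2 * I2" using reg by (intro mult_right_mono) auto
    then show ?thesis by (simp add: algebra_simps)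
  qed
  have kl: "\<kappa> \<le> lam" "\<kappa> \<le> \<mu>" "\<kappa> \<le> c / 2" unfolding \<kappa> by auto
  have k1: "\<kappa> * u^2 \<le> lam * u^2" "\<kappa> * (A * w^2) \<le> \<mu> * (A * w^2)" "\<kappa> * I1 \<le> c / 2 * I1" "\<kappa> * I2 \<le> c / 2 * I2"
    by (rule mult_right_mono[OF kl(1)], simp) (rule mult_right_mono[OF kl(2)], use pos in simp,
        rule mult_right_mono[OF kl(3)], use reg in simp, rule mult_right_mono[OF kl(3)], use reg in simp)
  have "- \<kappa> * ((S - S0)^2 + A * (V - V0)^2 + I1 + I2) = - (\<kappa> * u^2) - \<kappa> * (A * w^2) - \<kappa> * I1 - \<kappa> * I2"
    by (simp add: u_def w_def algebra_simps)
  moreover have "A * \<mu> * w^2 = \<mu> * (A * w^2)" by simp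
  ultimately show ?thesis unfolding LHS using t1 t2 t3 t4 t5 t6 t7 t8 k1 by linarith
qed

lemma dist_pair_le: "dist (S, I) (S0, 0::real) \<le> \<bar>S - S0\<bar> + \<bar>I\<bar>" for S I S0 :: real
proof -
  have "dist (S, I) (S0, 0::real) = norm (S - S0, I)" by (simp add: dist_norm)
  also have "\<dots> \<le> norm (S - S0) + norm I" by (rule norm_Pair_le)
  finally show ?thesis by simp
qed

lemma sq_le_abs: "u^2 \<le> a^2 \<Longrightarrow> 0 \<le> a \<Longrightarrow> \<bar>u\<bar> \<le> (a::real)"
  using abs_le_square_iff[of u a] by simp

lemma sq_lt_abs: "u^2 < a^2 \<Longrightarrow> 0 \<le> a \<Longrightarrow> \<bar>u\<bar> < (a::real)"
  by (metis abs_le_square_iff abs_of_nonneg linorder_not_le)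

lemma abs_le_sqrt: "u^2 \<le> W \<Longrightarrow> \<bar>u\<bar> \<le> sqrt W"
  by (metis real_sqrt_abs real_sqrt_le_mono)

lemma exp_decay: "0 < (\<kappa>::real) \<Longrightarrow> ((\<lambda>t. exp (- \<kappa> * t)) \<longlongrightarrow> 0) at_top"
proof -
  assume k: "0 < \<kappa>"
  have "filterlim (\<lambda>t. \<kappa> * t) at_top at_top"
    by (rule filterlim_tendsto_pos_mult_at_top[OF tendsto_const k filterlim_ident])
  then have "filterlim (\<lambda>t. exp (\<kappa> * t)) at_top at_top"
    by (rule filterlim_compose[OF exp_at_top])
  then have "((\<lambda>t. inverse (exp (\<kappa> * t))) \<longlongrightarrow> 0) at_top" by (rule tendsto_inverse_0_at_top)
  then show ?thesis by (simp add: exp_minus[symmetric])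
qed

lemma sol_facts:
  fixes x :: "real \<Rightarrow> real \<times> real \<times> real \<times> real" and X
  assumes "is_solution X orthant4 x"
  shows "continuous_on {0..} x" "\<And>t. 0 \<le> t \<Longrightarrow> x t \<in> orthant4"
    "\<And>t. 0 \<le> t \<Longrightarrow> (x has_vector_derivative X (x t)) (at t within {0..})"
  using assms unfolding is_solution_def
  by (auto intro!: continuous_on_vector_derivative)

lemma stable_core:
  fixes \<Lambda> \<mu> r k \<gamma>1 \<gamma>2 v1 v2 :: real and F1 f1 F2 f2 :: "real \<Rightarrow> real \<Rightarrow> real"
  assumes pos: "\<Lambda> > 0" "\<mu> > 0" "r > 0" "k > 0" "\<gamma>1 > 0" "\<gamma>2 > 0" "v1 \<ge> 0" "v2 \<ge> 0"
    and inc: "incidence_ok F1 f1" "incidence_ok F2 f2"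
    and h1: "f1 (\<Lambda> / (r + \<mu>)) 0 < \<gamma>1 + v1 + \<mu>"
    and h2: "f2 (\<Lambda> / (r + \<mu>)) 0 + k * (r * \<Lambda> / (\<mu> * (r + \<mu>))) < \<gamma>2 + v2 + \<mu>"
    and eps: "\<epsilon> > 0"
  shows "\<exists>\<delta>>0. \<forall>x. is_solution (model_rhs \<Lambda> \<mu> r k \<gamma>1 \<gamma>2 v1 v2 F1 F2) orthant4 x
            \<and> dist (x 0) (\<Lambda> / (r + \<mu>), r * \<Lambda> / (\<mu> * (r + \<mu>)), 0, 0) < \<delta> \<longrightarrow>
            (\<forall>t\<ge>0. dist (x t) (\<Lambda> / (r + \<mu>), r * \<Lambda> / (\<mu> * (r + \<mu>)), 0, 0) < \<epsilon>) \<and>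
            (x \<longlongrightarrow> (\<Lambda> / (r + \<mu>), r * \<Lambda> / (\<mu> * (r + \<mu>)), 0, 0)) at_top"
proof -
  define lam where "lam = r + \<mu>"
  define \<alpha>1 where "\<alpha>1 = \<gamma>1 + v1 + \<mu>"
  define \<alpha>2 where "\<alpha>2 = \<gamma>2 + v2 + \<mu>"
  define S0 where "S0 = \<Lambda> / lam"
  define V0 where "V0 = r * \<Lambda> / (\<mu> * lam)"
  define E0 where "E0 = (S0, V0, 0::real, 0::real)"
  define X where "X = model_rhs \<Lambda> \<mu> r k \<gamma>1 \<gamma>2 v1 v2 F1 F2"
  define \<sigma>1 where "\<sigma>1 = f1 S0 0"
  define \<sigma>2 where "\<sigma>2 = f2 S0 0"
  have lam0: "0 < lam" using pos by (simp add: lam_def)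
  have S00: "0 < S0" using pos lam0 by (simp add: S0_def)
  have V00: "0 < V0" using pos lam0 by (simp add: V0_def)
  have eL: "\<Lambda> = lam * S0" using lam0 by (simp add: S0_def)
  have erS: "r * S0 = \<mu> * V0" using lam0 pos by (simp add: S0_def V0_def field_simps)
  have a1: "\<mu> \<le> \<alpha>1" "\<mu> \<le> \<alpha>2" using pos by (simp_all add: \<alpha>1_def \<alpha>2_def)
  have h1': "\<sigma>1 < \<alpha>1" using h1 by (simp add: \<sigma>1_def S0_def lam_def \<alpha>1_def)
  have h2': "\<sigma>2 + k * V0 < \<alpha>2" using h2 by (simp add: \<sigma>2_def S0_def V0_def lam_def \<alpha>2_def)
  define c where "c = min ((\<alpha>1 - \<sigma>1) / 2) ((\<alpha>2 - \<sigma>2 - k * V0) / 3)"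
  have c0: "0 < c" using h1' h2' by (simp add: c_def)
  have c1: "c \<le> (\<alpha>1 - \<sigma>1) / 2" "c \<le> (\<alpha>2 - \<sigma>2 - k * V0) / 3" unfolding c_def by linarith+
  have f1c: "isCont (\<lambda>p. f1 (fst p) (snd p)) (S0, 0)" by (rule inc_props(2)[OF inc(1) S00])
  have f2c: "isCont (\<lambda>p. f2 (fst p) (snd p)) (S0, 0)" by (rule inc_props(2)[OF inc(2) S00])
  obtain \<rho>1 where \<rho>1: "\<rho>1 > 0" "\<And>p. dist p (S0, 0) < \<rho>1 \<Longrightarrow> dist (f1 (fst p) (snd p)) \<sigma>1 < c"
    using f1c c0 unfolding continuous_at_eps_delta \<sigma>1_def by fastforce
  obtain \<rho>2 where \<rho>2: "\<rho>2 > 0" "\<And>p. dist p (S0, 0) < \<rho>2 \<Longrightarrow> dist (f2 (fst p) (snd p)) \<sigma>2 < c"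
    using f2c c0 unfolding continuous_at_eps_delta \<sigma>2_def by fastforce
  define A where "A = lam * \<mu> / r^2"
  have A0: "0 < A" using lam0 pos by (simp add: A_def)
  have eA: "A * r^2 = lam * \<mu>" using pos by (simp add: A_def)
  define Q where "Q = \<alpha>1 + \<alpha>2 + A * k * (V0 + 1)"
  have Q0: "0 < Q" using a1 pos A0 V00 by (simp add: Q_def add_pos_nonneg)
  define \<rho> where "\<rho> = min (min (\<rho>1 / 3) (\<rho>2 / 3)) (min 1 (min (c / k) (c / (4 * Q))))"
  have \<rho>0: "0 < \<rho>" using \<rho>1 \<rho>2 c0 pos Q0 by (simp add: \<rho>_def)
  have \<rho>b: "\<rho> \<le> \<rho>1 / 3" "\<rho> \<le> \<rho>2 / 3" "\<rho> \<le> 1" "\<rho> \<le> c / k" "\<rho> \<le> c / (4 * Q)"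
    unfolding \<rho>_def by linarith+
  have \<rho>c: "2 * \<rho> * Q \<le> c / 2"
  proof -
    have "\<rho> * (4 * Q) \<le> c" using \<rho>b(5) Q0 by (simp add: le_divide_eq)
    then show ?thesis by simp
  qed
  have k\<rho>: "k * \<rho> \<le> c" using \<rho>b(4) pos by (simp add: le_divide_eq mult.commute)
  define \<kappa> where "\<kappa> = min lam (min \<mu> (c / 2))"
  have \<kappa>0: "0 < \<kappa>" using lam0 pos c0 by (simp add: \<kappa>_def)
  define W where "W z = (fst z - S0)^2 + A * (fst (snd z) - V0)^2 + fst (snd (snd z)) + snd (snd (snd z))" for z :: "real \<times> real \<times> real \<times> real"
  define DW where "DW z = 2 * (fst z - S0) * fst (X z) + A * (2 * (fst (snd z) - V0) * fst (snd (X z)))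
       + fst (snd (snd (X z))) + snd (snd (snd (X z)))" for z :: "real \<times> real \<times> real \<times> real"
  have regW: "DW (S, V, I1, I2) \<le> - \<kappa> * W (S, V, I1, I2)"
    if r: "0 \<le> S" "0 \<le> V" "\<bar>S - S0\<bar> \<le> \<rho>" "\<bar>V - V0\<bar> \<le> \<rho>" "0 \<le> I1" "I1 \<le> \<rho>" "0 \<le> I2" "I2 \<le> \<rho>"
    for S V I1 I2
  proof -
    have d1: "dist (S, I1) (S0, 0) < \<rho>1" using dist_pair_le[of S I1 S0] r \<rho>b \<rho>0 by linarith
    have d2: "dist (S, I2) (S0, 0) < \<rho>2" using dist_pair_le[of S I2 S0] r \<rho>b \<rho>0 by linarith
    have f1b: "f1 S I1 < \<sigma>1 + c" using \<rho>1(2)[OF d1] by (simp add: dist_real_def)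
    have f2b: "f2 S I2 < \<sigma>2 + c" using \<rho>2(2)[OF d2] by (simp add: dist_real_def)
    have fpos: "0 \<le> f1 S I1" "0 \<le> f2 S I2" "F1 S I1 = I1 * f1 S I1" "F2 S I2 = I2 * f2 S I2"
      using inc r unfolding incidence_ok_def by auto
    have kV: "k * V \<le> k * V0 + c"
    proof -
      have "k * V \<le> k * (V0 + \<rho>)" using r pos by (intro mult_left_mono) auto
      then show ?thesis using k\<rho> by (simp add: algebra_simps)
    qed
    have fb1: "f1 S I1 \<le> \<alpha>1 - c" using f1b c1(1) by argo
    have fb2: "f2 S I2 + k * V \<le> \<alpha>2 - c" using f2b kV c1(2) by argo
    have "DW (S, V, I1, I2) = 2 * (S - S0) * (\<Lambda> - I1 * f1 S I1 - I2 * f2 S I2 - lam * S)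
       + A * (2 * (V - V0) * (r * S - (\<mu> + k * I2) * V))
       + (I1 * f1 S I1 - \<alpha>1 * I1) + (I2 * f2 S I2 + k * I2 * V - \<alpha>2 * I2)"
      by (simp add: DW_def X_def model_rhs_def fpos lam_def \<alpha>1_def \<alpha>2_def)
    also have "\<dots> \<le> - \<kappa> * ((S - S0)^2 + A * (V - V0)^2 + I1 + I2)"
      by (rule lyap_ineq[OF eL erS eA A0 lam0 pos(2) pos(4) c0 pos(3) less_imp_le[OF V00] r(3,4,2,5,6,7,8) fpos(1) fb1 fpos(2) fb2 \<rho>b(3) \<rho>c[unfolded Q_def] \<kappa>_def])
    finally show ?thesis by (simp add: W_def)
  qed
  define \<rho>' where "\<rho>' = min \<rho> (\<epsilon> / 4)"
  have \<rho>'0: "0 < \<rho>'" using \<rho>0 eps by (simp add: \<rho>'_def)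
  define \<eta> where "\<eta> = min (\<rho>'^2) (min (A * \<rho>'^2) \<rho>')"
  have \<eta>0: "0 < \<eta>" using \<rho>'0 A0 by (simp add: \<eta>_def)
  have \<eta>b: "\<eta> \<le> \<rho>'^2" "\<eta> \<le> A * \<rho>'^2" "\<eta> \<le> \<rho>'" unfolding \<eta>_def by linarith+
  define \<delta> where "\<delta> = min 1 (\<eta> / (3 + A))"
  have \<delta>0: "0 < \<delta>" using \<eta>0 A0 by (simp add: \<delta>_def)
  have comps: "W z \<le> \<eta> \<Longrightarrow> z \<in> orthant4 \<Longrightarrow> \<bar>fst z - S0\<bar> \<le> \<rho>' \<and> \<bar>fst (snd z) - V0\<bar> \<le> \<rho>'
      \<and> fst (snd (snd z)) \<le> \<rho>' \<and> snd (snd (snd z)) \<le> \<rho>'" for z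
  proof -
    assume Wz: "W z \<le> \<eta>" and zo: "z \<in> orthant4"
    have nn: "0 \<le> fst (snd (snd z))" "0 \<le> snd (snd (snd z))" using zo by (auto simp: orthant4_def split: prod.splits)
    have sq: "0 \<le> (fst z - S0)^2" "0 \<le> A * (fst (snd z) - V0)^2" using A0 by auto
    have "(fst z - S0)^2 \<le> \<rho>'^2" using Wz nn sq \<eta>b unfolding W_def by linarith
    then have 1: "\<bar>fst z - S0\<bar> \<le> \<rho>'" using \<rho>'0 by (intro sq_le_abs) auto
    have "A * (fst (snd z) - V0)^2 \<le> A * \<rho>'^2" using Wz nn sq \<eta>b unfolding W_def by linarith
    then have "(fst (snd z) - V0)^2 \<le> \<rho>'^2" using A0 by simp
    then have 2: "\<bar>fst (snd z) - V0\<bar> \<le> \<rho>'" using \<rho>'0 by (intro sq_le_abs) auto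
    have 3: "fst (snd (snd z)) \<le> \<rho>'" "snd (snd (snd z)) \<le> \<rho>'" using Wz nn sq \<eta>b unfolding W_def by linarith+
    show ?thesis using 1 2 3 by simp
  qed
  have comps_lt: "W z < \<eta> \<Longrightarrow> z \<in> orthant4 \<Longrightarrow> dist z E0 < \<epsilon>" for z
  proof -
    assume Wz: "W z < \<eta>" and zo: "z \<in> orthant4"
    have nn: "0 \<le> fst (snd (snd z))" "0 \<le> snd (snd (snd z))" using zo by (auto simp: orthant4_def split: prod.splits)
    have sq: "0 \<le> (fst z - S0)^2" "0 \<le> A * (fst (snd z) - V0)^2" using A0 by auto
    have "(fst z - S0)^2 < \<rho>'^2" using Wz nn sq \<eta>b unfolding W_def by linarith
    then have 1: "\<bar>fst z - S0\<bar> < \<rho>'" using \<rho>'0 by (intro sq_lt_abs) auto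
    have "A * (fst (snd z) - V0)^2 < A * \<rho>'^2" using Wz nn sq \<eta>b unfolding W_def by linarith
    then have "(fst (snd z) - V0)^2 < \<rho>'^2" using A0 by simp
    then have 2: "\<bar>fst (snd z) - V0\<bar> < \<rho>'" using \<rho>'0 by (intro sq_lt_abs) auto
    have 3: "fst (snd (snd z)) < \<rho>'" "snd (snd (snd z)) < \<rho>'" using Wz nn sq \<eta>b unfolding W_def by linarith+
    have "dist z E0 = norm (fst z - S0, fst (snd z) - V0, fst (snd (snd z)), snd (snd (snd z)))"
      by (cases z) (simp add: E0_def dist_norm)
    also have "\<dots> \<le> \<bar>fst z - S0\<bar> + \<bar>fst (snd z) - V0\<bar> + \<bar>fst (snd (snd z))\<bar> + \<bar>snd (snd (snd z))\<bar>"
      by (rule norm4_le)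
    also have "\<dots> < 4 * \<rho>'" using 1 2 3 nn by simp
    also have "\<dots> \<le> \<epsilon>" by (simp add: \<rho>'_def)
    finally show ?thesis .
  qed
  show ?thesis
  proof (rule exI[of _ \<delta>], rule conjI[OF \<delta>0], rule allI, rule impI)
    fix x assume xa: "is_solution (model_rhs \<Lambda> \<mu> r k \<gamma>1 \<gamma>2 v1 v2 F1 F2) orthant4 x
            \<and> dist (x 0) (\<Lambda> / (r + \<mu>), r * \<Lambda> / (\<mu> * (r + \<mu>)), 0, 0) < \<delta>"
    then have sol: "is_solution X orthant4 x" and d0: "dist (x 0) E0 < \<delta>"
      by (simp_all add: X_def E0_def S0_def V0_def lam_def)
    note sf = sol_facts[OF sol]
    define Wt where "Wt t = W (x t)" for t
    define DWt where "DWt t = DW (x t)" for t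
    have Wc: "continuous_on {0..} Wt" unfolding Wt_def W_def by (intro continuous_intros sf(1))
    have Wd: "(Wt has_real_derivative DWt t) (at t)" if t: "0 < t" for t
    proof -
      have dx: "(x has_vector_derivative X (x t)) (at t within {0..})" using sf(3) t by simp
      note cd = comp_derivs[OF dx t]
      have e1: "((\<lambda>t. (fst (x t) - S0)^2) has_real_derivative (2 * (fst (x t) - S0) * fst (X (x t)))) (at t)"
        by (rule DERIV_cong[OF DERIV_power[OF DERIV_diff[OF cd(1) DERIV_const[of S0]], of 2]]) (simp add: algebra_simps)
      have e2: "((\<lambda>t. A * (fst (snd (x t)) - V0)^2) has_real_derivative A * (2 * (fst (snd (x t)) - V0) * fst (snd (X (x t))))) (at t)"
        by (rule DERIV_cong[OF DERIV_cmult[OF DERIV_power[OF DERIV_diff[OF cd(2) DERIV_const[of V0]], of 2], of A]]) (simp add: algebra_simps)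
      show ?thesis unfolding Wt_def W_def DWt_def DW_def
        by (intro DERIV_add e1 e2 cd(3) cd(4))
    qed
    have W0: "Wt 0 < \<eta>"
    proof -
      define d where "d = dist (x 0) E0"
      have dd: "d < \<delta>" "0 \<le> d" using d0 by (simp_all add: d_def)
      have x0o: "x 0 \<in> orthant4" using sf(2)[of 0] by simp
      have e: "x 0 - E0 = (fst (x 0) - S0, fst (snd (x 0)) - V0, fst (snd (snd (x 0))), snd (snd (snd (x 0))))"
        by (simp add: E0_def prod_eq_iff)
      have cs: "\<bar>fst (x 0) - S0\<bar> \<le> d" "\<bar>fst (snd (x 0)) - V0\<bar> \<le> d" "\<bar>fst (snd (snd (x 0)))\<bar> \<le> d"
        "\<bar>snd (snd (snd (x 0)))\<bar> \<le> d"
        using comps_le[of "x 0 - E0"] unfolding e d_def dist_norm by simp_all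
      have d1: "d \<le> 1" using dd by (simp add: \<delta>_def)
      have "(fst (x 0) - S0)^2 \<le> d^2" using cs(1) by (simp add: abs_le_square_iff[symmetric])
      also have "d^2 \<le> d" using dd d1 by (simp add: power2_eq_square mult_left_le)
      finally have q1: "(fst (x 0) - S0)^2 \<le> d" .
      have "(fst (snd (x 0)) - V0)^2 \<le> d^2" using cs(2) by (simp add: abs_le_square_iff[symmetric])
      also have "d^2 \<le> d" using dd d1 by (simp add: power2_eq_square mult_left_le)
      finally have "(fst (snd (x 0)) - V0)^2 \<le> d" .
      then have q2: "A * (fst (snd (x 0)) - V0)^2 \<le> A * d" using A0 by (intro mult_left_mono) auto
      have "Wt 0 \<le> d + A * d + d + d" unfolding Wt_def W_def using q1 q2 cs(3,4) by linarith
      also have "\<dots> = (3 + A) * d" by (simp add: algebra_simps)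
      also have "\<dots> < (3 + A) * \<delta>" using dd A0 by (intro mult_strict_left_mono) auto
      also have "\<dots> \<le> (3 + A) * (\<eta> / (3 + A))" using A0 by (intro mult_left_mono) (auto simp: \<delta>_def)
      also have "\<dots> = \<eta>" using A0 by simp
      finally show ?thesis .
    qed
    have region: "DWt t \<le> - \<kappa> * Wt t" if "0 \<le> t" "Wt t \<le> \<eta>" for t
    proof -
      have xo: "x t \<in> orthant4" using sf(2) that by simp
      have cm: "\<bar>fst (x t) - S0\<bar> \<le> \<rho>'" "\<bar>fst (snd (x t)) - V0\<bar> \<le> \<rho>'" "fst (snd (snd (x t))) \<le> \<rho>'"
         "snd (snd (snd (x t))) \<le> \<rho>'" using comps[OF _ xo] that by (auto simp: Wt_def)
      have \<rho>'\<rho>: "\<rho>' \<le> \<rho>" by (simp add: \<rho>'_def)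
      obtain S V I1 I2 where xt: "x t = (S, V, I1, I2)" by (cases "x t") auto
      have nn: "0 \<le> S" "0 \<le> V" "0 \<le> I1" "0 \<le> I2" using xo by (auto simp: xt orthant4_def)
      show ?thesis unfolding DWt_def Wt_def xt
        by (rule regW) (use nn cm \<rho>'\<rho> xt in auto)
    qed
    have Wlt: "Wt t < \<eta>" if "0 \<le> t" for t
    proof (rule barrier_lt[OF Wc Wd W0 _ that])
      fix t :: real assume "0 < t" "Wt t \<le> \<eta>"
      then have "DWt t \<le> - \<kappa> * Wt t" by (intro region) auto
      moreover have "0 \<le> Wt t"
      proof -
        obtain S V I1 I2 where xt: "x t = (S, V, I1, I2)" by (cases "x t") auto
        have "x t \<in> orthant4" using sf(2)[of t] \<open>0 < t\<close> by simp
        then have nn: "0 \<le> I1" "0 \<le> I2" by (simp_all add: xt orthant4_def)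
        have "0 \<le> A * (V - V0)^2" using A0 by simp
        then show ?thesis using nn by (simp add: Wt_def W_def xt)
      qed
      moreover have "0 \<le> \<kappa> * Wt t" using \<kappa>0 \<open>0 \<le> Wt t\<close> by simp
      ultimately show "DWt t \<le> 0" by linarith
    qed
    have part1: "\<forall>t\<ge>0. dist (x t) (\<Lambda> / (r + \<mu>), r * \<Lambda> / (\<mu> * (r + \<mu>)), 0, 0) < \<epsilon>"
    proof (intro allI impI)
      fix t :: real assume t: "0 \<le> t"
      have "dist (x t) E0 < \<epsilon>" using comps_lt[OF _ sf(2)[OF t]] Wlt[OF t] by (simp add: Wt_def)
      then show "dist (x t) (\<Lambda> / (r + \<mu>), r * \<Lambda> / (\<mu> * (r + \<mu>)), 0, 0) < \<epsilon>"
        by (simp add: E0_def S0_def V0_def lam_def)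
    qed
    have decay: "Wt t \<le> Wt 0 * exp (- \<kappa> * t)" if t: "0 \<le> t" for t
    proof -
      have "(- Wt 0) * exp ((- \<kappa>) * t) \<le> - Wt t"
      proof (rule growth[where y = "\<lambda>t. - Wt t" and y' = "\<lambda>t. - DWt t"])
        show "continuous_on {0..} (\<lambda>t. - Wt t)" by (intro continuous_intros Wc)
        show "((\<lambda>t. - Wt t) has_real_derivative - DWt t) (at t)" if "0 < t" for t
          using Wd[OF that] by (rule DERIV_minus)
        show "- \<kappa> * - Wt t \<le> - DWt t" if "0 < t" for t
          using region[of t] Wlt[of t] that by simp
      qed (use t in auto)
      then show ?thesis by simp
    qed
    have part2: "(x \<longlongrightarrow> (\<Lambda> / (r + \<mu>), r * \<Lambda> / (\<mu> * (r + \<mu>)), 0, 0)) at_top"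
    proof -
      define g where "g t = Wt 0 * exp (- \<kappa> * t)" for t
      have g0: "(g \<longlongrightarrow> 0) at_top" unfolding g_def
        using tendsto_mult[OF tendsto_const exp_decay[OF \<kappa>0], of "Wt 0"] by simp
      define h where "h t = sqrt (g t) + sqrt (g t / A) + 2 * g t" for t
      have h0: "(h \<longlongrightarrow> 0) at_top" unfolding h_def
        using tendsto_add[OF tendsto_add[OF tendsto_real_sqrt[OF g0] tendsto_real_sqrt[OF tendsto_divide[OF g0 tendsto_const]]]
            tendsto_mult[OF tendsto_const g0, of 2]] A0 by simp
      have bnd: "dist (x t) E0 \<le> h t" if t: "0 \<le> t" for t
      proof -
        have xo: "x t \<in> orthant4" using sf(2) t by simp
        obtain S V I1 I2 where xt: "x t = (S, V, I1, I2)" by (cases "x t") auto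
        have nn: "0 \<le> S" "0 \<le> V" "0 \<le> I1" "0 \<le> I2" using xo by (auto simp: xt orthant4_def)
        have Wg: "Wt t \<le> g t" using decay[OF t] by (simp add: g_def)
        have We: "Wt t = (S - S0)^2 + A * (V - V0)^2 + I1 + I2" by (simp add: Wt_def W_def xt)
        have sq: "0 \<le> (S - S0)^2" "0 \<le> A * (V - V0)^2" using A0 by auto
        have 1: "\<bar>S - S0\<bar> \<le> sqrt (g t)" using We Wg nn sq by (intro abs_le_sqrt) linarith
        have "A * (V - V0)^2 \<le> g t" using We Wg nn sq by linarith
        then have "(V - V0)^2 \<le> g t / A" using A0 by (simp add: field_simps)
        then have 2: "\<bar>V - V0\<bar> \<le> sqrt (g t / A)" by (rule abs_le_sqrt)
        have 3: "I1 \<le> g t" "I2 \<le> g t" using We Wg nn sq by linarith+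
        have "dist (x t) E0 = norm (S - S0, V - V0, I1, I2)" by (simp add: xt E0_def dist_norm)
        also have "\<dots> \<le> \<bar>S - S0\<bar> + \<bar>V - V0\<bar> + \<bar>I1\<bar> + \<bar>I2\<bar>" by (rule norm4_le)
        also have "\<dots> \<le> h t" using 1 2 3 nn by (simp add: h_def)
        finally show ?thesis .
      qed
      have ev1: "\<forall>\<^sub>F t in at_top. (0::real) \<le> dist (x t) E0" by simp
      have ev2: "\<forall>\<^sub>F t in at_top. dist (x t) E0 \<le> h t"
        using eventually_ge_at_top[of "0::real"] by eventually_elim (rule bnd)
      have "((\<lambda>t. dist (x t) E0) \<longlongrightarrow> 0) at_top"
        by (rule tendsto_sandwich[OF ev1 ev2 tendsto_const h0])
      then have "(x \<longlongrightarrow> E0) at_top" by (rule iffD2[OF tendsto_dist_iff])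
      then show ?thesis by (simp add: E0_def S0_def V0_def lam_def)
    qed
    from part1 part2 show "(\<forall>t\<ge>0. dist (x t) (\<Lambda> / (r + \<mu>), r * \<Lambda> / (\<mu> * (r + \<mu>)), 0, 0) < \<epsilon>) \<and>
            (x \<longlongrightarrow> (\<Lambda> / (r + \<mu>), r * \<Lambda> / (\<mu> * (r + \<mu>)), 0, 0)) at_top" by blast
  qed
qed

lemma grow_contra:
  fixes y y' :: "real \<Rightarrow> real"
  assumes cont: "continuous_on {0..} y" and der: "\<And>t. 0 < t \<Longrightarrow> (y has_real_derivative y' t) (at t)"
    and ge: "\<And>t. 0 < t \<Longrightarrow> c * y t \<le> y' t" and c: "0 < c" and y0: "y 0 = \<theta>" "0 < \<theta>" "\<theta> < \<epsilon>"
    and bnd: "\<And>t. 0 \<le> t \<Longrightarrow> y t < \<epsilon>"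
  shows False
proof -
  define t where "t = ln (\<epsilon> / \<theta>) / c"
  have q: "1 < \<epsilon> / \<theta>" using y0 by simp
  have t0: "0 \<le> t" using q c by (simp add: t_def)
  have "exp (c * t) = \<epsilon> / \<theta>" using c q by (simp add: t_def)
  then have "y 0 * exp (c * t) = \<epsilon>" using y0 by simp
  moreover have "y 0 * exp (c * t) \<le> y t" by (rule growth[OF cont der ge t0])
  ultimately show False using bnd[OF t0] by simp
qed

lemma unstable_core:
  fixes \<Lambda> \<mu> r k \<gamma>1 \<gamma>2 v1 v2 :: real and F1 f1 F2 f2 :: "real \<Rightarrow> real \<Rightarrow> real"
  assumes pos: "\<Lambda> > 0" "\<mu> > 0" "r > 0" "k > 0" "\<gamma>1 > 0" "\<gamma>2 > 0" "v1 \<ge> 0" "v2 \<ge> 0"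
    and inc: "incidence_ok F1 f1" "incidence_ok F2 f2"
    and h: "f1 (\<Lambda> / (r + \<mu>)) 0 > \<gamma>1 + v1 + \<mu> \<or>
            f2 (\<Lambda> / (r + \<mu>)) 0 + k * (r * \<Lambda> / (\<mu> * (r + \<mu>))) > \<gamma>2 + v2 + \<mu>"
  shows "\<not> lyapunov_stable (model_rhs \<Lambda> \<mu> r k \<gamma>1 \<gamma>2 v1 v2 F1 F2) orthant4
             (\<Lambda> / (r + \<mu>), r * \<Lambda> / (\<mu> * (r + \<mu>)), 0, 0)"
proof
  define lam where "lam = r + \<mu>"
  define \<alpha>1 where "\<alpha>1 = \<gamma>1 + v1 + \<mu>"
  define \<alpha>2 where "\<alpha>2 = \<gamma>2 + v2 + \<mu>"
  define S0 where "S0 = \<Lambda> / lam"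
  define V0 where "V0 = r * \<Lambda> / (\<mu> * lam)"
  define E0 where "E0 = (S0, V0, 0::real, 0::real)"
  define X where "X = model_rhs \<Lambda> \<mu> r k \<gamma>1 \<gamma>2 v1 v2 F1 F2"
  define \<sigma>1 where "\<sigma>1 = f1 S0 0"
  define \<sigma>2 where "\<sigma>2 = f2 S0 0"
  assume "lyapunov_stable (model_rhs \<Lambda> \<mu> r k \<gamma>1 \<gamma>2 v1 v2 F1 F2) orthant4
             (\<Lambda> / (r + \<mu>), r * \<Lambda> / (\<mu> * (r + \<mu>)), 0, 0)"
  then have st: "lyapunov_stable X orthant4 E0" by (simp add: X_def E0_def S0_def V0_def lam_def)
  have lam0: "0 < lam" using pos by (simp add: lam_def)
  have S00: "0 < S0" using pos lam0 by (simp add: S0_def)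
  have V00: "0 < V0" using pos lam0 by (simp add: V0_def)
  have f1c: "isCont (\<lambda>p. f1 (fst p) (snd p)) (S0, 0)" by (rule inc_props(2)[OF inc(1) S00])
  have f2c: "isCont (\<lambda>p. f2 (fst p) (snd p)) (S0, 0)" by (rule inc_props(2)[OF inc(2) S00])
  have Ff: "F1 S I = I * f1 S I" "F2 S I = I * f2 S I" if "0 \<le> S" "0 \<le> I" for S I
    using inc that unfolding incidence_ok_def by auto
  have close: "\<exists>x. is_solution X orthant4 x \<and> x 0 = z0 \<and> (\<forall>t\<ge>0. dist (x t) E0 < \<epsilon>)"
    if hh: "0 < \<epsilon>" "z0 \<in> orthant4" "dist z0 E0 < \<delta>" "\<forall>x. is_solution X orthant4 x \<and> dist (x 0) E0 < \<delta> \<longrightarrow>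
        (\<forall>t\<ge>0. dist (x t) E0 < \<epsilon>)" for \<epsilon> \<delta> z0
  proof -
    obtain x where "is_solution X orthant4 x" "x 0 = z0"
      using exist_sol[OF pos inc hh(2)] unfolding X_def by blast
    then show ?thesis using hh by auto
  qed
  have dS: "dist (S, I) (S0, 0) < 2 * e" if "dist (S, V, I1, I2) E0 < e" "I = I1 \<or> I = I2" for S V I1 I2 I e
  proof -
    have "\<bar>S - S0\<bar> \<le> dist (S, V, I1, I2) E0" "\<bar>I\<bar> \<le> dist (S, V, I1, I2) E0"
      using comps_le[of "(S, V, I1, I2) - E0"] that(2) by (auto simp: E0_def dist_norm)
    then show ?thesis using dist_pair_le[of S I S0] that(1) by linarith
  qed
  from h show False
  proof
    assume "f1 (\<Lambda> / (r + \<mu>)) 0 > \<gamma>1 + v1 + \<mu>"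
    then have hs: "\<sigma>1 > \<alpha>1" by (simp add: \<sigma>1_def S0_def lam_def \<alpha>1_def)
    define c where "c = (\<sigma>1 - \<alpha>1) / 2"
    have c0: "0 < c" using hs by (simp add: c_def)
    obtain \<rho>1 where \<rho>1: "\<rho>1 > 0" "\<And>p. dist p (S0, 0) < \<rho>1 \<Longrightarrow> dist (f1 (fst p) (snd p)) \<sigma>1 < c"
      using f1c c0 unfolding continuous_at_eps_delta \<sigma>1_def by fastforce
    define \<epsilon> where "\<epsilon> = \<rho>1 / 2"
    have e0: "0 < \<epsilon>" using \<rho>1 by (simp add: \<epsilon>_def)
    obtain \<delta> where d0: "\<delta> > 0" and dst: "\<forall>x. is_solution X orthant4 x \<and> dist (x 0) E0 < \<delta> \<longrightarrow>
        (\<forall>t\<ge>0. dist (x t) E0 < \<epsilon>)"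
      using st e0 unfolding lyapunov_stable_def by blast
    define \<theta> where "\<theta> = min (\<delta> / 2) (\<epsilon> / 2)"
    have th: "0 < \<theta>" "\<theta> < \<delta>" "\<theta> < \<epsilon>" using d0 e0 by (auto simp: \<theta>_def)
    define z0 where "z0 = (S0, V0, \<theta>, 0::real)"
    have z0o: "z0 \<in> orthant4" using S00 V00 th by (simp add: z0_def orthant4_def)
    have dz: "dist z0 E0 = \<theta>" using th by (simp add: z0_def E0_def dist_norm)
    obtain x where sol: "is_solution X orthant4 x" and x0: "x 0 = z0" and cl: "\<forall>t\<ge>0. dist (x t) E0 < \<epsilon>"
      using close[OF e0 z0o _ dst] dz th by auto
    note sf = sol_facts[OF sol]
    define i where "i t = fst (snd (snd (x t)))" for t
    show False
    proof (rule grow_contra[of i "\<lambda>t. fst (snd (snd (X (x t))))" c \<theta> \<epsilon>])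
      show "continuous_on {0..} i" unfolding i_def by (intro continuous_intros sf(1))
      show "(i has_real_derivative fst (snd (snd (X (x t))))) (at t)" if t: "0 < t" for t
      proof -
        have dx: "(x has_vector_derivative X (x t)) (at t within {0..})" using sf(3) t by simp
        show ?thesis unfolding i_def[abs_def] by (rule comp_derivs(3)[OF dx t])
      qed
      show "c * i t \<le> fst (snd (snd (X (x t))))" if t: "0 < t" for t
      proof -
        obtain S V I1 I2 where xt: "x t = (S, V, I1, I2)" by (cases "x t") auto
        have xo: "x t \<in> orthant4" using sf(2) t by simp
        have nn: "0 \<le> S" "0 \<le> I1" using xo by (auto simp: xt orthant4_def)
        have dxt: "dist (x t) E0 < \<epsilon>" using cl t by auto
        have "dist (S, I1) (S0, 0) < 2 * \<epsilon>" using dS[of S V I1 I2 \<epsilon> I1] dxt xt by auto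
        then have "dist (S, I1) (S0, 0) < \<rho>1" by (simp add: \<epsilon>_def)
        then have "dist (f1 S I1) \<sigma>1 < c" using \<rho>1(2) by fastforce
        then have "\<bar>f1 S I1 - \<sigma>1\<bar> < c" by (simp add: dist_real_def)
        then have fb: "\<alpha>1 + c \<le> f1 S I1" unfolding c_def by argo
        have "c * I1 \<le> I1 * (f1 S I1 - \<alpha>1)"
          using mult_left_mono[of c "f1 S I1 - \<alpha>1" I1] fb nn by (simp add: mult.commute)
        then show ?thesis using Ff(1)[OF nn]
          by (simp add: i_def xt X_def model_rhs_def \<alpha>1_def algebra_simps)
      qed
      show "i 0 = \<theta>" by (simp add: i_def x0 z0_def)
      show "i t < \<epsilon>" if "0 \<le> t" for t
      proof -
        have "\<bar>i t\<bar> \<le> dist (x t) E0"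
          using comps_le(3)[of "x t - E0"] by (simp add: i_def E0_def dist_norm)
        then show ?thesis using cl that by fastforce
      qed
    qed (use c0 th in auto)
  next
    assume "f2 (\<Lambda> / (r + \<mu>)) 0 + k * (r * \<Lambda> / (\<mu> * (r + \<mu>))) > \<gamma>2 + v2 + \<mu>"
    then have hs: "\<sigma>2 + k * V0 > \<alpha>2" by (simp add: \<sigma>2_def S0_def V0_def lam_def \<alpha>2_def)
    define c where "c = (\<sigma>2 + k * V0 - \<alpha>2) / 2"
    have c0: "0 < c" using hs by (simp add: c_def)
    obtain \<rho>2 where \<rho>2: "\<rho>2 > 0" "\<And>p. dist p (S0, 0) < \<rho>2 \<Longrightarrow> dist (f2 (fst p) (snd p)) \<sigma>2 < c / 2"
      using f2c half_gt_zero[OF c0] unfolding continuous_at_eps_delta \<sigma>2_def by fastforce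
    define \<epsilon> where "\<epsilon> = min (\<rho>2 / 2) (c / (2 * k))"
    have e0: "0 < \<epsilon>" using \<rho>2 c0 pos by (simp add: \<epsilon>_def)
    have eb: "\<epsilon> \<le> \<rho>2 / 2" "\<epsilon> \<le> c / (2 * k)" unfolding \<epsilon>_def by linarith+
    obtain \<delta> where d0: "\<delta> > 0" and dst: "\<forall>x. is_solution X orthant4 x \<and> dist (x 0) E0 < \<delta> \<longrightarrow>
        (\<forall>t\<ge>0. dist (x t) E0 < \<epsilon>)"
      using st e0 unfolding lyapunov_stable_def by blast
    define \<theta> where "\<theta> = min (\<delta> / 2) (\<epsilon> / 2)"
    have th: "0 < \<theta>" "\<theta> < \<delta>" "\<theta> < \<epsilon>" using d0 e0 by (auto simp: \<theta>_def)
    define z0 where "z0 = (S0, V0, 0::real, \<theta>)"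
    have z0o: "z0 \<in> orthant4" using S00 V00 th by (simp add: z0_def orthant4_def)
    have dz: "dist z0 E0 = \<theta>" using th by (simp add: z0_def E0_def dist_norm)
    obtain x where sol: "is_solution X orthant4 x" and x0: "x 0 = z0" and cl: "\<forall>t\<ge>0. dist (x t) E0 < \<epsilon>"
      using close[OF e0 z0o _ dst] dz th by auto
    note sf = sol_facts[OF sol]
    define j where "j t = snd (snd (snd (x t)))" for t
    show False
    proof (rule grow_contra[of j "\<lambda>t. snd (snd (snd (X (x t))))" c \<theta> \<epsilon>])
      show "continuous_on {0..} j" unfolding j_def by (intro continuous_intros sf(1))
      show "(j has_real_derivative snd (snd (snd (X (x t))))) (at t)" if t: "0 < t" for t
      proof -
        have dx: "(x has_vector_derivative X (x t)) (at t within {0..})" using sf(3) t by simp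
        show ?thesis unfolding j_def[abs_def] by (rule comp_derivs(4)[OF dx t])
      qed
      show "c * j t \<le> snd (snd (snd (X (x t))))" if t: "0 < t" for t
      proof -
        obtain S V I1 I2 where xt: "x t = (S, V, I1, I2)" by (cases "x t") auto
        have xo: "x t \<in> orthant4" using sf(2) t by simp
        have nn: "0 \<le> S" "0 \<le> I2" using xo by (auto simp: xt orthant4_def)
        have dxt: "dist (x t) E0 < \<epsilon>" using cl t by auto
        have "dist (S, I2) (S0, 0) < \<rho>2" using dS[of S V I1 I2 \<epsilon> I2] dxt xt eb by auto
        then have "dist (f2 S I2) \<sigma>2 < c / 2" using \<rho>2(2) by fastforce
        then have "\<bar>f2 S I2 - \<sigma>2\<bar> < c / 2" by (simp add: dist_real_def)
        then have fb: "\<sigma>2 - c / 2 \<le> f2 S I2" by argo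
        have "\<bar>V - V0\<bar> \<le> dist (x t) E0"
          using comps_le(2)[of "x t - E0"] by (simp add: xt E0_def dist_norm)
        then have "\<bar>V - V0\<bar> \<le> c / (2 * k)" using dxt eb by linarith
        then have "k * \<bar>V - V0\<bar> \<le> c / 2" using pos by (simp add: field_simps)
        moreover have "k * V0 - k * V \<le> k * \<bar>V - V0\<bar>" using pos
          by (metis abs_ge_minus_self abs_minus_commute minus_diff_eq mult_left_mono less_imp_le right_diff_distrib)
        ultimately have kv: "k * V0 - c / 2 \<le> k * V" by linarith
        have fb2: "\<alpha>2 + c \<le> f2 S I2 + k * V" using fb kv unfolding c_def by argo
        have "c * I2 \<le> I2 * (f2 S I2 + k * V - \<alpha>2)"
          using mult_left_mono[of c "f2 S I2 + k * V - \<alpha>2" I2] fb2 nn by (simp add: mult.commute)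
        then show ?thesis using Ff(2)[OF nn]
          by (simp add: j_def xt X_def model_rhs_def \<alpha>2_def algebra_simps)
      qed
      show "j 0 = \<theta>" by (simp add: j_def x0 z0_def)
      show "j t < \<epsilon>" if "0 \<le> t" for t
      proof -
        have "\<bar>j t\<bar> \<le> dist (x t) E0"
          using comps_le(4)[of "x t - E0"] by (simp add: j_def E0_def dist_norm)
        then show ?thesis using cl that by fastforce
      qed
    qed (use c0 th in auto)
  qed
qed

theorem mainTheorem6:
  fixes \<Lambda> \<mu> r k \<gamma>1 \<gamma>2 v1 v2 :: real
    and F1 f1 F2 f2 :: "real \<Rightarrow> real \<Rightarrow> real"
  assumes "\<Lambda> > 0" "\<mu> > 0" "r > 0" "k > 0" "\<gamma>1 > 0" "\<gamma>2 > 0" "v1 \<ge> 0" "v2 \<ge> 0"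
    and "incidence_ok F1 f1" "incidence_ok F2 f2"
  shows "let lam = r + \<mu>; \<alpha>1 = \<gamma>1 + v1 + \<mu>; \<alpha>2 = \<gamma>2 + v2 + \<mu>;
             S0 = \<Lambda> / lam;
             \<sigma>1 = deriv (\<lambda>I. F1 S0 I) 0; \<sigma>2 = deriv (\<lambda>I. F2 S0 I) 0;
             R1 = \<sigma>1 / \<alpha>1;
             R2 = \<sigma>2 / \<alpha>2 + k * r * \<Lambda> / (\<alpha>2 * \<mu> * lam);
             R0 = max R1 R2;
             X = model_rhs \<Lambda> \<mu> r k \<gamma>1 \<gamma>2 v1 v2 F1 F2;
             E0 = (\<Lambda> / lam, r * \<Lambda> / (\<mu> * lam), 0, 0)
         in (R0 > 1 \<longrightarrow> unstable X orthant4 E0) \<and>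
            (R0 < 1 \<longrightarrow> locally_asymptotically_stable X orthant4 E0)"
proof -
  note pos = assms(1-8)
  note inc = assms(9,10)
  have S00: "0 < \<Lambda> / (r + \<mu>)" using pos by simp
  have a1: "0 < \<gamma>1 + v1 + \<mu>" and a2: "0 < \<gamma>2 + v2 + \<mu>" using pos by simp_all
  have s1: "deriv (\<lambda>I. F1 (\<Lambda> / (r + \<mu>)) I) 0 = f1 (\<Lambda> / (r + \<mu>)) 0" by (rule inc_props(1)[OF inc(1) S00])
  have s2: "deriv (\<lambda>I. F2 (\<Lambda> / (r + \<mu>)) I) 0 = f2 (\<Lambda> / (r + \<mu>)) 0" by (rule inc_props(1)[OF inc(2) S00])
  define A where "A = f1 (\<Lambda> / (r + \<mu>)) 0"
  define B where "B = f2 (\<Lambda> / (r + \<mu>)) 0 + k * (r * \<Lambda> / (\<mu> * (r + \<mu>)))"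
  have R2e: "f2 (\<Lambda> / (r + \<mu>)) 0 / (\<gamma>2 + v2 + \<mu>) + k * r * \<Lambda> / ((\<gamma>2 + v2 + \<mu>) * \<mu> * (r + \<mu>))
     = B / (\<gamma>2 + v2 + \<mu>)"
  proof -
    have e: "k * r * \<Lambda> / ((\<gamma>2 + v2 + \<mu>) * \<mu> * (r + \<mu>)) = k * (r * \<Lambda> / (\<mu> * (r + \<mu>))) / (\<gamma>2 + v2 + \<mu>)"
      by (simp add: mult_ac)
    show ?thesis unfolding e B_def by (simp add: add_divide_distrib)
  qed
  have R1e: "f1 (\<Lambda> / (r + \<mu>)) 0 / (\<gamma>1 + v1 + \<mu>) = A / (\<gamma>1 + v1 + \<mu>)" by (simp add: A_def)
  show ?thesis unfolding Let_def s1 s2 R2e R1e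
  proof (intro conjI impI)
    assume "1 < max (A / (\<gamma>1 + v1 + \<mu>)) (B / (\<gamma>2 + v2 + \<mu>))"
    then have "A > \<gamma>1 + v1 + \<mu> \<or> B > \<gamma>2 + v2 + \<mu>"
      using a1 a2 by (auto simp: less_max_iff_disj less_divide_eq)
    then show "unstable (model_rhs \<Lambda> \<mu> r k \<gamma>1 \<gamma>2 v1 v2 F1 F2) orthant4
        (\<Lambda> / (r + \<mu>), r * \<Lambda> / (\<mu> * (r + \<mu>)), 0, 0)"
      unfolding unstable_def A_def B_def by (rule unstable_core[OF pos inc])
  next
    assume "max (A / (\<gamma>1 + v1 + \<mu>)) (B / (\<gamma>2 + v2 + \<mu>)) < 1"
    then have h1: "A < \<gamma>1 + v1 + \<mu>" and h2: "B < \<gamma>2 + v2 + \<mu>"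
      using a1 a2 by (auto simp: divide_less_eq)
    note core = stable_core[OF pos inc h1[unfolded A_def] h2[unfolded B_def]]
    show "locally_asymptotically_stable (model_rhs \<Lambda> \<mu> r k \<gamma>1 \<gamma>2 v1 v2 F1 F2) orthant4
        (\<Lambda> / (r + \<mu>), r * \<Lambda> / (\<mu> * (r + \<mu>)), 0, 0)"
      unfolding locally_asymptotically_stable_def lyapunov_stable_def
    proof (intro conjI allI impI)
      fix \<epsilon> :: real assume "0 < \<epsilon>"
      from core[OF this] show "\<exists>\<delta>>0. \<forall>x. is_solution (model_rhs \<Lambda> \<mu> r k \<gamma>1 \<gamma>2 v1 v2 F1 F2) orthant4 x \<and>
          dist (x 0) (\<Lambda> / (r + \<mu>), r * \<Lambda> / (\<mu> * (r + \<mu>)), 0, 0) < \<delta> \<longrightarrow>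
          (\<forall>t\<ge>0. dist (x t) (\<Lambda> / (r + \<mu>), r * \<Lambda> / (\<mu> * (r + \<mu>)), 0, 0) < \<epsilon>)" by blast
    next
      from core[of 1] show "\<exists>\<eta>>0. \<forall>x. is_solution (model_rhs \<Lambda> \<mu> r k \<gamma>1 \<gamma>2 v1 v2 F1 F2) orthant4 x \<and>
          dist (x 0) (\<Lambda> / (r + \<mu>), r * \<Lambda> / (\<mu> * (r + \<mu>)), 0, 0) < \<eta> \<longrightarrow>
          (x \<longlongrightarrow> (\<Lambda> / (r + \<mu>), r * \<Lambda> / (\<mu> * (r + \<mu>)), 0, 0)) at_top" by auto
    qed
  qed
qed

end
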